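(* Let $\mathcal I$ be an inference family on a finite hypergraph $H=(V,F)$ and $\Psi=\{\Psi_\alpha\}$ a graphical model with $\Psi_\alpha=\exp\langle\bar\theta_\alpha,\phi_\alpha\rangle$, $\bar\theta_\alpha=(\bar\theta'_\alpha,(\bar\theta^\alpha_i)_{i\in\alpha})$. Let $T$ be the LBP update map on message parameters $\boldsymbol\mu=\{\mu_{\alpha\to i}\}$, $$T(\boldsymbol\mu)_{\alpha\to i}=\Lambda_i^{-1}\Big(\Lambda_\alpha\big(\bar\theta'_\alpha,\ (\bar\theta^\alpha_j+\textstyle\sum_{\beta\in N_j\setminus\alpha}\mu_{\beta\to j})_{j\in\alpha}\big)_i\Big)-\sum_{\gamma\in N_i\setminus\alpha}\mu_{\gamma\to i}.$$ At an LBP fixed point $\boldsymbol\mu^*$ with beliefs $b_i,b_\alpha$, $$\frac{\partial T(\boldsymbol\mu)_{\alpha\to i}}{\partial\mu_{\beta\to j}}=\begin{cases}\mathrm{Var}_{b_i}(\phi_i)^{-1}\mathrm{Cov}_{b_\alpha}(\phi_i,\phi_j)&\text{if }j\in\alpha\setminus\{i\}\text{ and }\beta\in N_j\setminus\{\alpha\},\\0&\text{otherwise.}\end{cases}$$ Equivalently, $T'(\boldsymbol\mu^* )=\mathcal M(\boldsymbol u)$ with $u^\alpha_{i\to j}=\mathrm{Var}_{b_j}(\phi_j)^{-1}\mathrm{Cov}_{b_\alpha}(\phi_j,\phi_i)$.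
   Context: Inference family: for $i\in V$ an exponential family $\mathcal E_i$ on $(\mathcal X_i,\nu_i)$ with statistic $\phi_i\in\mathbb{R}^{r_i}$ and bijective expectation map $\Lambda_i(\theta_i)=\mathbb E_{\theta_i}\phi_i$; for $\alpha\in F$ an exponential family $\mathcal E_\alpha$ on $\prod_{i\in\alpha}\mathcal X_i$ with statistic $\phi_\alpha=(\bar\phi_\alpha,(\phi_i)_{i\in\alpha})$ and expectation map $\Lambda_\alpha$; $\Lambda_\alpha(\cdot)_i$ denotes the $\mathbb E\phi_i$-component. Covariances are invertible and marginals of $\mathcal E_\alpha$ onto $x_i$ lie in $\mathcal E_i$. $N_i=\{\alpha\in F:i\in\alpha\}$. Messages $m_{\alpha\to i}(x_i)=\exp\langle\mu_{\alpha\to i},\phi_i(x_i)\rangle$; $T$ is the parametric form of the parallel LBP update $m_{\alpha\to i}\propto\int\Psi_\alpha\prod_{j\in\alpha\setminus i}\prod_{\beta\ni j,\beta\ne\alpha}m_{\beta\to j}\,d\nu_{\alpha\setminus i}$. A fixed point satisfies $T(\boldsymbol\mu^* )=\boldsymbol\mu^*$; beliefs are $b_i\propto\prod_{\alpha\ni i}m_{\alpha\to i}$, $b_\alpha\propto\Psi_\alpha\prod_{j\in\alpha}\prod_{\beta\ni j,\beta\ne\alpha}m_{\beta\to j}$. Directed edges $\vec E=\{(\alpha\to i)\}$, $s(\alpha\to i)=\alpha$, $t(\alpha\to i)=i$; $e'\rightharpoonup e$ means $t(e')\in s(e)$, $t(e')\ne t(e)$, $s(e')\ne s(e)$; $(\mathcal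 M(\boldsymbol u)f)(e)=\sum_{e':e'\rightharpoonup e}u^{s(e)}_{t(e')\to t(e)}f(e')$. *)

theory Defs
  imports "HOL-Analysis.Analysis"
begin

text \<open>A vector of dimension d is a function nat => real vanishing from index d on;
  a d x d matrix is a function nat => nat => real, only entries below d matter.\<close>

definition vecs :: "nat \<Rightarrow> (nat \<Rightarrow> real) set" where
  "vecs d = {v. \<forall>k\<ge>d. v k = 0}"

definition ip :: "nat \<Rightarrow> (nat \<Rightarrow> real) \<Rightarrow> (nat \<Rightarrow> real) \<Rightarrow> real" where
  "ip d a b = (\<Sum>k<d. a k * b k)"

definition cat2 :: "nat \<Rightarrow> (nat \<Rightarrow> real) \<Rightarrow> (nat \<Rightarrow> real) \<Rightarrow> (nat \<Rightarrow> real)" where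
  "cat2 d u w = (\<lambda>k. if k < d then u k else w (k - d))"

fun catl :: "(nat \<times> (nat \<Rightarrow> real)) list \<Rightarrow> (nat \<Rightarrow> real)" where
  "catl [] = (\<lambda>_. 0)"
| "catl ((d, u) # xs) = cat2 d u (catl xs)"

definition mat_mult :: "nat \<Rightarrow> (nat \<Rightarrow> nat \<Rightarrow> real) \<Rightarrow> (nat \<Rightarrow> nat \<Rightarrow> real) \<Rightarrow> (nat \<Rightarrow> nat \<Rightarrow> real)" where
  "mat_mult n A B = (\<lambda>k l. \<Sum>m<n. A k m * B m l)"

definition mat_is_inv :: "nat \<Rightarrow> (nat \<Rightarrow> nat \<Rightarrow> real) \<Rightarrow> (nat \<Rightarrow> nat \<Rightarrow> real) \<Rightarrow> bool" where
  "mat_is_inv n A B \<longleftrightarrow> (\<forall>k<n. \<forall>l<n.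
      mat_mult n A B k l = (if k = l then 1 else 0) \<and> mat_mult n B A k l = (if k = l then 1 else 0))"

definition invertible_n :: "nat \<Rightarrow> (nat \<Rightarrow> nat \<Rightarrow> real) \<Rightarrow> bool" where
  "invertible_n n A \<longleftrightarrow> (\<exists>B. mat_is_inv n A B)"

definition mat_inv :: "nat \<Rightarrow> (nat \<Rightarrow> nat \<Rightarrow> real) \<Rightarrow> (nat \<Rightarrow> nat \<Rightarrow> real)" where
  "mat_inv n A = (THE B. mat_is_inv n A B \<and> (\<forall>k l. n \<le> k \<or> n \<le> l \<longrightarrow> B k l = 0))"

definition ef_Z :: "'a measure \<Rightarrow> nat \<Rightarrow> ('a \<Rightarrow> nat \<Rightarrow> real) \<Rightarrow> (nat \<Rightarrow> real) \<Rightarrow> ennreal" where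
  "ef_Z M d s \<theta> = (\<integral>\<^sup>+ x. ennreal (exp (ip d \<theta> (s x))) \<partial>M)"

definition ef_Theta :: "'a measure \<Rightarrow> nat \<Rightarrow> ('a \<Rightarrow> nat \<Rightarrow> real) \<Rightarrow> (nat \<Rightarrow> real) set" where
  "ef_Theta M d s = {\<theta> \<in> vecs d. ef_Z M d s \<theta> < \<infinity>}"

definition ef_dens :: "'a measure \<Rightarrow> nat \<Rightarrow> ('a \<Rightarrow> nat \<Rightarrow> real) \<Rightarrow> (nat \<Rightarrow> real) \<Rightarrow> 'a \<Rightarrow> real" where
  "ef_dens M d s \<theta> x = exp (ip d \<theta> (s x)) / (\<integral> y. exp (ip d \<theta> (s y)) \<partial>M)"

definition ef_distr :: "'a measure \<Rightarrow> nat \<Rightarrow> ('a \<Rightarrow> nat \<Rightarrow> real) \<Rightarrow> (nat \<Rightarrow> real) \<Rightarrow> 'a measure" where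
  "ef_distr M d s \<theta> = density M (\<lambda>x. ennreal (ef_dens M d s \<theta> x))"

definition ef_E :: "'a measure \<Rightarrow> nat \<Rightarrow> ('a \<Rightarrow> nat \<Rightarrow> real) \<Rightarrow> (nat \<Rightarrow> real) \<Rightarrow> ('a \<Rightarrow> real) \<Rightarrow> real" where
  "ef_E M d s \<theta> g = (\<integral> x. g x * ef_dens M d s \<theta> x \<partial>M)"

definition ef_mean :: "'a measure \<Rightarrow> nat \<Rightarrow> ('a \<Rightarrow> nat \<Rightarrow> real) \<Rightarrow> (nat \<Rightarrow> real) \<Rightarrow> (nat \<Rightarrow> real)" where
  "ef_mean M d s \<theta> = (\<lambda>k. if k < d then ef_E M d s \<theta> (\<lambda>x. s x k) else 0)"

definition ef_cov :: "'a measure \<Rightarrow> nat \<Rightarrow> ('a \<Rightarrow> nat \<Rightarrow> real) \<Rightarrow> (nat \<Rightarrow> real)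
     \<Rightarrow> ('a \<Rightarrow> nat \<Rightarrow> real) \<Rightarrow> ('a \<Rightarrow> nat \<Rightarrow> real) \<Rightarrow> (nat \<Rightarrow> nat \<Rightarrow> real)" where
  "ef_cov M d s \<theta> f g = (\<lambda>k l. ef_E M d s \<theta> (\<lambda>x. f x k * g x l)
                                 - ef_E M d s \<theta> (\<lambda>x. f x k) * ef_E M d s \<theta> (\<lambda>x. g x l))"

definition open_in_vecs :: "nat \<Rightarrow> (nat \<Rightarrow> real) set \<Rightarrow> bool" where
  "open_in_vecs d S \<longleftrightarrow> S \<subseteq> vecs d \<and>
     (\<forall>\<theta>\<in>S. \<exists>e>0. \<forall>\<theta>'\<in>vecs d. (\<Sum>k<d. (\<theta>' k - \<theta> k)\<^sup>2) < e \<longrightarrow> \<theta>' \<in> S)"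

definition exp_family :: "'a measure \<Rightarrow> nat \<Rightarrow> ('a \<Rightarrow> nat \<Rightarrow> real) \<Rightarrow> bool" where
  "exp_family M d s \<longleftrightarrow>
     (\<forall>k<d. (\<lambda>x. s x k) \<in> borel_measurable M) \<and>
     (\<forall>x\<in>space M. s x \<in> vecs d) \<and>
     open_in_vecs d (ef_Theta M d s) \<and>
     (\<forall>\<theta>\<in>ef_Theta M d s. invertible_n d (ef_cov M d s \<theta> s s))"

definition nbhd :: "'v set set \<Rightarrow> 'v \<Rightarrow> 'v set set" where
  "nbhd F i = {\<alpha> \<in> F. i \<in> \<alpha>}"

text \<open>Factor statistic \<phi>_\<alpha> = (\<phi>bar_\<alpha>, (\<phi>_i(x_i))_{i \<in> \<alpha>}), blocks in increasing order of i.\<close>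
definition fac_dim :: "('v::linorder \<Rightarrow> nat) \<Rightarrow> ('v set \<Rightarrow> nat) \<Rightarrow> 'v set \<Rightarrow> nat" where
  "fac_dim r rb \<alpha> = rb \<alpha> + (\<Sum>i\<in>\<alpha>. r i)"

definition fac_stat :: "('v::linorder \<Rightarrow> nat) \<Rightarrow> ('v \<Rightarrow> 'x \<Rightarrow> nat \<Rightarrow> real)
    \<Rightarrow> ('v set \<Rightarrow> nat) \<Rightarrow> ('v set \<Rightarrow> ('v \<Rightarrow> 'x) \<Rightarrow> nat \<Rightarrow> real) \<Rightarrow> 'v set \<Rightarrow> ('v \<Rightarrow> 'x) \<Rightarrow> nat \<Rightarrow> real" where
  "fac_stat r \<phi> rb \<phi>b \<alpha> x =
     catl ((rb \<alpha>, \<phi>b \<alpha> x) # map (\<lambda>i. (r i, \<phi> i (x i))) (sorted_list_of_set \<alpha>))"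

definition fac_meas :: "('v \<Rightarrow> 'x measure) \<Rightarrow> 'v set \<Rightarrow> ('v \<Rightarrow> 'x) measure" where
  "fac_meas \<nu> \<alpha> = PiM \<alpha> \<nu>"

definition inference_family ::
  "'v::linorder set \<Rightarrow> 'v set set \<Rightarrow> ('v \<Rightarrow> 'x measure) \<Rightarrow> ('v \<Rightarrow> nat) \<Rightarrow> ('v \<Rightarrow> 'x \<Rightarrow> nat \<Rightarrow> real)
     \<Rightarrow> ('v set \<Rightarrow> nat) \<Rightarrow> ('v set \<Rightarrow> ('v \<Rightarrow> 'x) \<Rightarrow> nat \<Rightarrow> real) \<Rightarrow> bool" where
  "inference_family V F \<nu> r \<phi> rb \<phi>b \<longleftrightarrow>
     finite V \<and> finite F \<and> (\<forall>\<alpha>\<in>F. \<alpha> \<subseteq> V) \<and>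
     (\<forall>i\<in>V. sigma_finite_measure (\<nu> i) \<and> exp_family (\<nu> i) (r i) (\<phi> i) \<and>
            inj_on (ef_mean (\<nu> i) (r i) (\<phi> i)) (ef_Theta (\<nu> i) (r i) (\<phi> i))) \<and>
     (\<forall>\<alpha>\<in>F. exp_family (fac_meas \<nu> \<alpha>) (fac_dim r rb \<alpha>) (fac_stat r \<phi> rb \<phi>b \<alpha>) \<and>
        (\<forall>\<theta>\<in>ef_Theta (fac_meas \<nu> \<alpha>) (fac_dim r rb \<alpha>) (fac_stat r \<phi> rb \<phi>b \<alpha>). \<forall>i\<in>\<alpha>.
           \<exists>\<theta>i\<in>ef_Theta (\<nu> i) (r i) (\<phi> i).
             distr (ef_distr (fac_meas \<nu> \<alpha>) (fac_dim r rb \<alpha>) (fac_stat r \<phi> rb \<phi>b \<alpha>) \<theta>) (\<nu> i) (\<lambda>x. x i)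
             = ef_distr (\<nu> i) (r i) (\<phi> i) \<theta>i))"

text \<open>Natural parameter of the factor belief:
  (\<theta>bar'_\<alpha>, (\<theta>bar^\<alpha>_j + \<Sum>_{\<beta> \<in> N_j \ \<alpha>} \<mu>_{\<beta>\<rightarrow>j})_{j\<in>\<alpha>}).\<close>
definition fac_param :: "'v::linorder set set \<Rightarrow> ('v \<Rightarrow> nat) \<Rightarrow> ('v set \<Rightarrow> nat)
    \<Rightarrow> ('v set \<Rightarrow> nat \<Rightarrow> real) \<Rightarrow> ('v set \<Rightarrow> 'v \<Rightarrow> nat \<Rightarrow> real)
    \<Rightarrow> ('v set \<Rightarrow> 'v \<Rightarrow> nat \<Rightarrow> real) \<Rightarrow> 'v set \<Rightarrow> nat \<Rightarrow> real" where
  "fac_param F r rb thb' thb \<mu> \<alpha> =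
     catl ((rb \<alpha>, thb' \<alpha>) # map (\<lambda>j. (r j, \<lambda>k. thb \<alpha> j k + (\<Sum>\<beta>\<in>nbhd F j - {\<alpha>}. \<mu> \<beta> j k)))
                                 (sorted_list_of_set \<alpha>))"

definition lbp_T ::
  "'v::linorder set set \<Rightarrow> ('v \<Rightarrow> 'x measure) \<Rightarrow> ('v \<Rightarrow> nat) \<Rightarrow> ('v \<Rightarrow> 'x \<Rightarrow> nat \<Rightarrow> real)
     \<Rightarrow> ('v set \<Rightarrow> nat) \<Rightarrow> ('v set \<Rightarrow> ('v \<Rightarrow> 'x) \<Rightarrow> nat \<Rightarrow> real)
     \<Rightarrow> ('v set \<Rightarrow> nat \<Rightarrow> real) \<Rightarrow> ('v set \<Rightarrow> 'v \<Rightarrow> nat \<Rightarrow> real)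
     \<Rightarrow> ('v set \<Rightarrow> 'v \<Rightarrow> nat \<Rightarrow> real) \<Rightarrow> 'v set \<Rightarrow> 'v \<Rightarrow> nat \<Rightarrow> real" where
  "lbp_T F \<nu> r \<phi> rb \<phi>b thb' thb \<mu> \<alpha> i =
     (let \<theta>\<alpha> = fac_param F r rb thb' thb \<mu> \<alpha>;
          m = (\<lambda>k. if k < r i then
                      ef_E (fac_meas \<nu> \<alpha>) (fac_dim r rb \<alpha>) (fac_stat r \<phi> rb \<phi>b \<alpha>) \<theta>\<alpha> (\<lambda>x. \<phi> i (x i) k)
                    else 0);
          \<theta>i = the_inv_into (ef_Theta (\<nu> i) (r i) (\<phi> i)) (ef_mean (\<nu> i) (r i) (\<phi> i)) m
      in (\<lambda>k. \<theta>i k - (\<Sum>\<gamma>\<in>nbhd F i - {\<alpha>}. \<mu> \<gamma> i k)))"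

definition perturb :: "('v set \<Rightarrow> 'v \<Rightarrow> nat \<Rightarrow> real) \<Rightarrow> 'v set \<Rightarrow> 'v \<Rightarrow> nat \<Rightarrow> real
    \<Rightarrow> ('v set \<Rightarrow> 'v \<Rightarrow> nat \<Rightarrow> real)" where
  "perturb \<mu> \<beta> j l t = \<mu>(\<beta> := (\<mu> \<beta>)(j := (\<lambda>k. \<mu> \<beta> j k + (if k = l then t else 0))))"

end

theory Submission
  imports Defs "HOL-Homology.Invariance_of_Domain"
begin

lemma exp_taylor2_bound: "\<bar>exp (u::real) - 1 - u\<bar> \<le> u\<^sup>2 * exp \<bar>u\<bar>"
proof -
  obtain t where t: "\<bar>t\<bar> \<le> \<bar>u\<bar>" "exp u = (\<Sum>m<2. u ^ m / fact m) + exp t / fact 2 * u ^ 2"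
    using Maclaurin_exp_le[of u 2] by blast
  have "exp u - 1 - u = exp t / 2 * u^2" using t(2) by (simp add: numeral_2_eq_2)
  moreover have "exp t \<le> exp \<bar>u\<bar>" using t(1) by simp
  moreover have "0 \<le> u\<^sup>2" by simp
  ultimately have "\<bar>exp u - 1 - u\<bar> = exp t / 2 * u\<^sup>2"
    by (metis abs_of_nonneg divide_nonneg_nonneg exp_ge_zero mult_nonneg_nonneg zero_le_numeral)
  also have "\<dots> \<le> exp \<bar>u\<bar> * u\<^sup>2"
    using \<open>exp t \<le> exp \<bar>u\<bar>\<close> by (intro mult_right_mono) (auto intro: order.trans[of _ "exp \<bar>u\<bar>"])
  finally show ?thesis by (simp add: mult.commute)
qed

lemma poly_exp_bound:
  fixes y \<delta> :: real assumes "y \<ge> 0" "\<delta> > 0"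
  shows "(1+y)^3 \<le> (6/\<delta>)^3 * exp (\<delta>/2) * exp (\<delta>*y/2)"
proof -
  have "(1+y)*\<delta>/6 \<le> exp ((1+y)*\<delta>/6)" using exp_ge_add_one_self[of "(1+y)*\<delta>/6"] by linarith
  hence "((1+y)*\<delta>/6)^3 \<le> (exp ((1+y)*\<delta>/6))^3"
    by (intro power_mono) (use assms in auto)
  also have "(exp ((1+y)*\<delta>/6))^3 = exp (\<delta>/2) * exp (\<delta>*y/2)"
    by (simp add: exp_of_nat_mult[symmetric] exp_add[symmetric] algebra_simps)
  finally have *: "(1+y)^3 * (\<delta>/6)^3 \<le> exp (\<delta>/2) * exp (\<delta>*y/2)"
    by (simp add: power_mult_distrib[symmetric] algebra_simps)
  have "(1+y)^3 = (6/\<delta>)^3 * ((1+y)^3 * (\<delta>/6)^3)" using assms by (simp add: field_simps)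
  also have "\<dots> \<le> (6/\<delta>)^3 * (exp (\<delta>/2) * exp (\<delta>*y/2))"
    by (rule mult_left_mono[OF *]) (use assms in simp)
  finally show ?thesis by simp
qed

lemma ratio_est:
  fixes a0 b0 A1 B1 Ra Rb n L K :: real
  assumes b0: "b0 > 0" and hA: "\<bar>A1\<bar> \<le> L*n" and hB: "\<bar>B1\<bar> \<le> L*n"
    and hRa: "\<bar>Ra\<bar> \<le> K*n\<^sup>2" and hRb: "\<bar>Rb\<bar> \<le> K*n\<^sup>2"
    and n: "0 \<le> n" "n \<le> 1" and small: "L*n + K*n\<^sup>2 \<le> b0/2" and L: "L \<ge> 0" and K: "K \<ge> 0"
  shows "\<bar>(a0+A1+Ra)/(b0+B1+Rb) - a0/b0 - (A1*b0 - a0*B1)/b0\<^sup>2\<bar>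
     \<le> (2*(b0+\<bar>a0\<bar>)*L*(L+K)/b0^3 + 2*(b0+\<bar>a0\<bar>)*K/b0\<^sup>2) * n\<^sup>2"
proof -
  define b where "b = b0+B1+Rb"
  have bb: "\<bar>b - b0\<bar> \<le> L*n + K*n\<^sup>2" unfolding b_def using hB hRb by linarith
  hence bpos: "b \<ge> b0/2" using small by linarith
  hence bpos': "b > 0" using b0 by linarith
  have bb2: "\<bar>b - b0\<bar> \<le> (L+K)*n"
  proof -
    have "K*n\<^sup>2 \<le> K*n" using n K by (intro mult_left_mono) (auto simp: power2_eq_square intro: mult_left_le_one_le)
    thus ?thesis using bb by (simp add: algebra_simps)
  qed
  have id: "(a0+A1+Ra)/b - a0/b0 - (A1*b0 - a0*B1)/b0\<^sup>2
      = (b0*A1 - a0*B1)*(b0 - b)/(b*b0\<^sup>2) + (b0*Ra - a0*Rb)/(b*b0)"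
  proof -
    have B1: "B1 = b - b0 - Rb" unfolding b_def by simp
    show ?thesis using b0 bpos' unfolding B1 by (simp add: field_simps power2_eq_square) algebra
  qed
  have t1: "\<bar>b0*A1 - a0*B1\<bar> \<le> (b0+\<bar>a0\<bar>)*(L*n)"
  proof -
    have "\<bar>b0*A1 - a0*B1\<bar> \<le> b0*\<bar>A1\<bar> + \<bar>a0\<bar>*\<bar>B1\<bar>" using b0 by (simp add: abs_mult abs_triangle_ineq4[THEN order.trans])
    also have "\<dots> \<le> b0*(L*n) + \<bar>a0\<bar>*(L*n)" using hA hB b0 by (intro add_mono mult_left_mono) auto
    finally show ?thesis by (simp add: algebra_simps)
  qed
  have t2: "\<bar>b0*Ra - a0*Rb\<bar> \<le> (b0+\<bar>a0\<bar>)*(K*n\<^sup>2)"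
  proof -
    have "\<bar>b0*Ra - a0*Rb\<bar> \<le> b0*\<bar>Ra\<bar> + \<bar>a0\<bar>*\<bar>Rb\<bar>" using b0 by (simp add: abs_mult abs_triangle_ineq4[THEN order.trans])
    also have "\<dots> \<le> b0*(K*n\<^sup>2) + \<bar>a0\<bar>*(K*n\<^sup>2)" using hRa hRb b0 by (intro add_mono mult_left_mono) auto
    finally show ?thesis by (simp add: algebra_simps)
  qed
  have e1: "\<bar>(b0*A1 - a0*B1)*(b0 - b)/(b*b0\<^sup>2)\<bar> \<le> 2*(b0+\<bar>a0\<bar>)*L*(L+K)/b0^3 * n\<^sup>2"
  proof -
    have "\<bar>(b0*A1 - a0*B1)*(b0 - b)\<bar> \<le> ((b0+\<bar>a0\<bar>)*(L*n)) * ((L+K)*n)"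
      unfolding abs_mult using t1 bb2 by (intro mult_mono) (auto simp: abs_minus_commute)
    moreover have "b*b0\<^sup>2 \<ge> b0^3/2" using bpos b0 by (simp add: power2_eq_square power3_eq_cube)
    ultimately have "\<bar>(b0*A1 - a0*B1)*(b0 - b)\<bar>/(b*b0\<^sup>2) \<le> ((b0+\<bar>a0\<bar>)*(L*n)) * ((L+K)*n) / (b0^3/2)"
      using b0 bpos' by (intro frac_le) (auto intro: mult_nonneg_nonneg)
    thus ?thesis using bpos' b0 by (simp add: abs_divide abs_mult power2_eq_square field_simps)
  qed
  have e2: "\<bar>(b0*Ra - a0*Rb)/(b*b0)\<bar> \<le> 2*(b0+\<bar>a0\<bar>)*K/b0\<^sup>2 * n\<^sup>2"
  proof -
    have "b*b0 \<ge> b0\<^sup>2/2" using bpos b0 by (simp add: power2_eq_square)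
    hence "\<bar>b0*Ra - a0*Rb\<bar>/(b*b0) \<le> (b0+\<bar>a0\<bar>)*(K*n\<^sup>2) / (b0\<^sup>2/2)"
      using b0 bpos' t2 by (intro frac_le) (auto intro: mult_nonneg_nonneg)
    thus ?thesis using bpos' b0 by (simp add: abs_divide abs_mult field_simps)
  qed
  show ?thesis unfolding b_def[symmetric] id using e1 e2 abs_triangle_ineq[of "(b0*A1 - a0*B1)*(b0 - b)/(b*b0\<^sup>2)" "(b0*Ra - a0*Rb)/(b*b0)"]
    by (simp add: algebra_simps)
qed

definition n1 :: "nat \<Rightarrow> (nat \<Rightarrow> real) \<Rightarrow> real" where
  "n1 d h = (\<Sum>k<d. \<bar>h k\<bar>)"

definition addv :: "(nat \<Rightarrow> real) \<Rightarrow> (nat \<Rightarrow> real) \<Rightarrow> (nat \<Rightarrow> real)" where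
  "addv a b = (\<lambda>k. a k + b k)"

lemma n1_nonneg: "n1 d h \<ge> 0" unfolding n1_def by (simp add: sum_nonneg)

lemma n1_comp: "k < d \<Longrightarrow> \<bar>h k\<bar> \<le> n1 d h"
  unfolding n1_def by (rule member_le_sum) auto

lemma ip_addv: "ip d (addv a b) v = ip d a v + ip d b v"
  unfolding ip_def addv_def by (simp add: sum.distrib algebra_simps)

lemma ip_bound: "\<bar>ip d h v\<bar> \<le> n1 d h * (\<Sum>k<d. \<bar>v k\<bar>)"
proof -
  have "\<bar>ip d h v\<bar> \<le> (\<Sum>k<d. \<bar>h k\<bar> * \<bar>v k\<bar>)" unfolding ip_def
    by (rule order.trans[OF sum_abs]) (simp add: abs_mult)
  also have "\<dots> \<le> (\<Sum>k<d. n1 d h * \<bar>v k\<bar>)"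
    by (rule sum_mono) (auto intro: mult_right_mono n1_comp)
  finally show ?thesis by (simp add: sum_distrib_left)
qed

lemma sq_le_n1: "(\<Sum>k<d. (h k)\<^sup>2) \<le> (n1 d h)\<^sup>2"
proof -
  have "(\<Sum>k<d. (h k)\<^sup>2) = (\<Sum>k<d. \<bar>h k\<bar> * \<bar>h k\<bar>)" by (simp add: power2_eq_square abs_mult[symmetric])
  also have "\<dots> \<le> (\<Sum>k<d. \<bar>h k\<bar> * n1 d h)" by (rule sum_mono) (rule mult_left_mono[OF n1_comp], auto)
  also have "\<dots> = (n1 d h)\<^sup>2" by (simp add: n1_def sum_distrib_right power2_eq_square)
  finally show ?thesis .
qed

lemma vecs_addv: "a \<in> vecs d \<Longrightarrow> b \<in> vecs d \<Longrightarrow> addv a b \<in> vecs d"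
  unfolding vecs_def addv_def by auto

lemma meas_ip:
  assumes "\<forall>k<d. (\<lambda>x. s x k) \<in> borel_measurable M"
  shows "(\<lambda>x. ip d \<theta> (s x)) \<in> borel_measurable M"
  unfolding ip_def using assms by (intro borel_measurable_sum borel_measurable_times) auto

lemma theta_integrable:
  assumes "\<forall>k<d. (\<lambda>x. s x k) \<in> borel_measurable M" "\<theta> \<in> ef_Theta M d s"
  shows "integrable M (\<lambda>x. exp (ip d \<theta> (s x)))"
proof (rule integrableI_nonneg)
  show "(\<lambda>x. exp (ip d \<theta> (s x))) \<in> borel_measurable M" using meas_ip[OF assms(1)] by measurable
  show "AE x in M. 0 \<le> exp (ip d \<theta> (s x))" by simp
  show "(\<integral>\<^sup>+ x. ennreal (exp (ip d \<theta> (s x))) \<partial>M) < \<infinity>"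
    using assms(2) unfolding ef_Theta_def ef_Z_def by simp
qed

lemma ef_E_ratio:
  "ef_E M d s \<theta> g = (\<integral>x. g x * exp (ip d \<theta> (s x)) \<partial>M) / (\<integral>x. exp (ip d \<theta> (s x)) \<partial>M)"
proof -
  have "(\<lambda>x. g x * ef_dens M d s \<theta> x) = (\<lambda>x. g x * exp (ip d \<theta> (s x)) / (\<integral>x. exp (ip d \<theta> (s x)) \<partial>M))"
    unfolding ef_dens_def by auto
  thus ?thesis unfolding ef_E_def by simp
qed

lemma exp_sum_abs_bound:
  fixes a :: "nat \<Rightarrow> real" assumes "d > 0" "c > 0"
  shows "exp (c / real d * (\<Sum>k<d. \<bar>a k\<bar>)) \<le> (\<Sum>k<d. exp (c * a k) + exp (- (c * a k)))"
proof -
  obtain k0 where k0: "k0 < d" "\<forall>k<d. \<bar>a k\<bar> \<le> \<bar>a k0\<bar>"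
  proof -
    have "finite ((\<lambda>k. \<bar>a k\<bar>) ` {..<d})" "(\<lambda>k. \<bar>a k\<bar>) ` {..<d} \<noteq> {}" using assms by auto
    then obtain k0 where "k0 \<in> {..<d}" "\<bar>a k0\<bar> = Max ((\<lambda>k. \<bar>a k\<bar>) ` {..<d})"
      using Max_in by (metis (no_types, lifting) imageE)
    thus ?thesis using that by (metis Max_ge \<open>finite _\<close> imageI lessThan_iff)
  qed
  have "(\<Sum>k<d. \<bar>a k\<bar>) \<le> (\<Sum>k<d. \<bar>a k0\<bar>)" by (rule sum_mono) (use k0 in auto)
  hence "c / real d * (\<Sum>k<d. \<bar>a k\<bar>) \<le> c / real d * (real d * \<bar>a k0\<bar>)"
    using assms by (intro mult_left_mono) auto
  also have "\<dots> = c * \<bar>a k0\<bar>" using assms by simp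
  finally have "exp (c / real d * (\<Sum>k<d. \<bar>a k\<bar>)) \<le> exp (c * \<bar>a k0\<bar>)" by simp
  also have "\<dots> \<le> exp (c * a k0) + exp (- (c * a k0))"
    by (cases "a k0 \<ge> 0") (auto simp: add_increasing add_increasing2)
  also have "\<dots> \<le> (\<Sum>k<d. exp (c * a k) + exp (- (c * a k)))"
    using k0(1) by (intro member_le_sum[where f="\<lambda>k. exp (c * a k) + exp (- (c * a k))"]) (auto intro: add_nonneg_nonneg)
  finally show ?thesis .
qed

definition ev :: "nat \<Rightarrow> real \<Rightarrow> nat \<Rightarrow> real" where
  "ev k c = (\<lambda>m. if m = k then c else 0)"

lemma ip_ev: "k < d \<Longrightarrow> ip d (ev k c) v = c * v k"
proof -
  assume k: "k < d"
  have "(\<Sum>m<d. (if m = k then c else 0) * v m) = (\<Sum>m<d. if m = k then c * v m else 0)" by (rule sum.cong) auto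
  thus ?thesis unfolding ip_def ev_def using k by simp
qed

lemma open_ball_vecs:
  assumes "open_in_vecs d T" "\<theta>0 \<in> T"
  shows "\<exists>e>0. \<forall>h\<in>vecs d. n1 d h < e \<longrightarrow> addv \<theta>0 h \<in> T"
proof -
  obtain e where e: "e > 0" "\<forall>\<theta>'\<in>vecs d. (\<Sum>k<d. (\<theta>' k - \<theta>0 k)\<^sup>2) < e \<longrightarrow> \<theta>' \<in> T"
    using assms unfolding open_in_vecs_def by blast
  have v: "\<theta>0 \<in> vecs d" using assms unfolding open_in_vecs_def by blast
  show ?thesis
  proof (intro exI[of _ "sqrt e"] conjI ballI impI)
    show "sqrt e > 0" using e by simp
    fix h assume h: "h \<in> vecs d" "n1 d h < sqrt e"
    have "(\<Sum>k<d. (addv \<theta>0 h k - \<theta>0 k)\<^sup>2) = (\<Sum>k<d. (h k)\<^sup>2)" by (simp add: addv_def)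
    also have "\<dots> \<le> (n1 d h)\<^sup>2" by (rule sq_le_n1)
    also have "\<dots> < e" using h(2) n1_nonneg[of d h]
      by (metis e(1) less_eq_real_def real_sqrt_less_iff real_sqrt_pow2 power2_less_imp_less real_sqrt_ge_zero
           power_strict_mono zero_less_numeral)
    finally show "addv \<theta>0 h \<in> T" using e(2) vecs_addv[OF v h(1)] by blast
  qed
qed

lemma ev_vecs: "k < d \<Longrightarrow> ev k c \<in> vecs d" unfolding vecs_def ev_def by auto

lemma n1_ev: "k < d \<Longrightarrow> n1 d (ev k c) = \<bar>c\<bar>"
proof -
  assume k: "k < d"
  have "(\<Sum>m<d. \<bar>if m = k then c else 0\<bar>) = (\<Sum>m<d. if m = k then \<bar>c\<bar> else 0)" by (rule sum.cong) auto
  thus ?thesis unfolding n1_def ev_def using k by simp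
qed

lemma meas_S:
  fixes s :: "'a \<Rightarrow> nat \<Rightarrow> real"
  assumes meas: "\<forall>k<d. (\<lambda>x. s x k) \<in> borel_measurable M"
  shows "(\<lambda>x. \<Sum>k<d. \<bar>s x k\<bar>) \<in> borel_measurable M"
  using meas by (intro borel_measurable_sum borel_measurable_abs) auto

lemma dom_setup:
  assumes meas: "\<forall>k<d. (\<lambda>x. s x k) \<in> borel_measurable M"
    and opn: "open_in_vecs d (ef_Theta M d s)" and th: "\<theta>0 \<in> ef_Theta M d s" and d: "d > 0"
  shows "\<exists>\<delta>>0. integrable M (\<lambda>x. exp (ip d \<theta>0 (s x)) * exp (\<delta> * (\<Sum>k<d. \<bar>s x k\<bar>)))"
proof -
  obtain e where e: "e > 0" "\<forall>h\<in>vecs d. n1 d h < e \<longrightarrow> addv \<theta>0 h \<in> ef_Theta M d s"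
    using open_ball_vecs[OF opn th] by blast
  define c where "c = e/2"
  have c: "c > 0" "c < e" using e by (auto simp: c_def)
  have int1: "integrable M (\<lambda>x. exp (ip d \<theta>0 (s x)) * exp (\<sigma> * (c * s x k)))" if "k < d" "\<sigma> \<in> {1, -1}" for k \<sigma>
  proof -
    have "addv \<theta>0 (ev k (\<sigma> * c)) \<in> ef_Theta M d s"
      using e(2) ev_vecs[OF that(1)] n1_ev[OF that(1)] that c by auto
    from theta_integrable[OF meas this]
    show ?thesis using that by (simp add: ip_addv ip_ev exp_add algebra_simps)
  qed
  define G where "G x = exp (ip d \<theta>0 (s x)) * (\<Sum>k<d. exp (c * s x k) + exp (- (c * s x k)))" for x
  have i1: "integrable M (\<lambda>x. exp (ip d \<theta>0 (s x)) * exp (c * s x k))" if "k < d" for k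
    using int1[of k 1] that by simp
  have i2: "integrable M (\<lambda>x. exp (ip d \<theta>0 (s x)) * exp (- (c * s x k)))" if "k < d" for k
    using int1[of k "-1"] that by simp
  have intG: "integrable M G" unfolding G_def sum_distrib_left distrib_left
    by (rule Bochner_Integration.integrable_sum, rule Bochner_Integration.integrable_add) (use i1 i2 in auto)
  show ?thesis
  proof (intro exI[of _ "c / real d"] conjI)
    show "c / real d > 0" using c d by simp
    show "integrable M (\<lambda>x. exp (ip d \<theta>0 (s x)) * exp (c / real d * (\<Sum>k<d. \<bar>s x k\<bar>)))"
    proof (rule Bochner_Integration.integrable_bound[OF intG])
      show "(\<lambda>x. exp (ip d \<theta>0 (s x)) * exp (c / real d * (\<Sum>k<d. \<bar>s x k\<bar>))) \<in> borel_measurable M"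
        using meas_ip[OF meas] meas_S[OF meas] by measurable
      show "AE x in M. norm (exp (ip d \<theta>0 (s x)) * exp (c / real d * (\<Sum>k<d. \<bar>s x k\<bar>))) \<le> norm (G x)"
      proof (rule AE_I2)
        fix x
        have "exp (c / real d * (\<Sum>k<d. \<bar>s x k\<bar>)) \<le> (\<Sum>k<d. exp (c * s x k) + exp (- (c * s x k)))"
          by (rule exp_sum_abs_bound[OF d c(1)])
        hence "exp (ip d \<theta>0 (s x)) * exp (c / real d * (\<Sum>k<d. \<bar>s x k\<bar>)) \<le> G x"
          unfolding G_def by (intro mult_left_mono) auto
        thus "norm (exp (ip d \<theta>0 (s x)) * exp (c / real d * (\<Sum>k<d. \<bar>s x k\<bar>))) \<le> norm (G x)" by simp
      qed
    qed
  qed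
qed

lemma abs_int_bound:
  fixes f g :: "'a \<Rightarrow> real"
  assumes "integrable M f" "integrable M g" "\<And>x. x \<in> space M \<Longrightarrow> \<bar>f x\<bar> \<le> g x"
  shows "\<bar>\<integral>x. f x \<partial>M\<bar> \<le> (\<integral>x. g x \<partial>M)"
proof -
  have "\<bar>\<integral>x. f x \<partial>M\<bar> \<le> (\<integral>x. \<bar>f x\<bar> \<partial>M)" using integral_norm_bound[of M f] by simp
  also have "\<dots> \<le> (\<integral>x. g x \<partial>M)" using assms by (intro integral_mono) auto
  finally show ?thesis .
qed

locale efam_pt =
  fixes M :: "'a measure" and d :: nat and s :: "'a \<Rightarrow> nat \<Rightarrow> real" and \<theta>0 :: "nat \<Rightarrow> real" and \<delta> :: real
  assumes meas: "\<forall>k<d. (\<lambda>x. s x k) \<in> borel_measurable M"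
    and dpos: "\<delta> > 0"
    and intD: "integrable M (\<lambda>x. exp (ip d \<theta>0 (s x)) * exp (\<delta> * (\<Sum>k<d. \<bar>s x k\<bar>)))"
begin

abbreviation "S x \<equiv> (\<Sum>k<d. \<bar>s x k\<bar>)"
abbreviation "E0 x \<equiv> exp (ip d \<theta>0 (s x))"
definition "K = (6/\<delta>)^3 * exp (\<delta>/2)"
definition "II = (\<integral>x. E0 x * exp (\<delta> * S x) \<partial>M)"

lemma S_nonneg: "S x \<ge> 0" by (simp add: sum_nonneg)

lemma K_pos: "K > 0" unfolding K_def using dpos by simp

lemma II_nonneg: "II \<ge> 0" unfolding II_def by (rule integral_nonneg_AE) auto

lemma measE0[measurable]: "(\<lambda>x. E0 x) \<in> borel_measurable M"
  using meas_ip[OF meas] by measurable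

lemma measS[measurable]: "(\<lambda>x. S x) \<in> borel_measurable M"
  using meas_S[OF meas] .

lemma dom_int:
  assumes f: "f \<in> borel_measurable M" and b: "\<forall>x\<in>space M. \<bar>f x\<bar> \<le> C * (E0 x * exp (\<delta> * S x))"
  shows "integrable M f"
proof (rule Bochner_Integration.integrable_bound[OF integrable_mult_right[OF intD, of C] f])
  show "AE x in M. norm (f x) \<le> norm (C * (E0 x * exp (\<delta> * S x)))"
    using b by (intro AE_I2) (auto intro: order.trans[OF _ abs_ge_self])
qed

lemma bound_poly: "(1 + S x)^3 * exp (\<delta> * S x / 2) \<le> K * exp (\<delta> * S x)"
proof -
  have "(1 + S x)^3 * exp (\<delta> * S x / 2) \<le> (K * exp (\<delta> * S x / 2)) * exp (\<delta> * S x / 2)"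
    using poly_exp_bound[OF S_nonneg dpos, of x] unfolding K_def by (intro mult_right_mono) auto
  also have "\<dots> = K * exp (\<delta> * S x)" by (simp add: mult.assoc exp_add[symmetric])
  finally show ?thesis .
qed

lemma ip_bound_S: "\<bar>ip d h (s x)\<bar> \<le> n1 d h * S x" using ip_bound[of d h "s x"] .

lemma int_g_h:
  assumes g: "g \<in> borel_measurable M" "\<forall>x\<in>space M. \<bar>g x\<bar> \<le> 1 + S x" and h: "n1 d h \<le> \<delta>/2"
  shows "integrable M (\<lambda>x. g x * exp (ip d (addv \<theta>0 h) (s x)))"
proof (rule dom_int)
  show "(\<lambda>x. g x * exp (ip d (addv \<theta>0 h) (s x))) \<in> borel_measurable M"
    using g(1) meas_ip[OF meas, of "addv \<theta>0 h"] by measurable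
  show "\<forall>x\<in>space M. \<bar>g x * exp (ip d (addv \<theta>0 h) (s x))\<bar> \<le> K * (E0 x * exp (\<delta> * S x))"
  proof
    fix x assume x: "x \<in> space M"
    have u: "ip d h (s x) \<le> \<delta> * S x / 2"
    proof -
      have "ip d h (s x) \<le> n1 d h * S x" using ip_bound_S[of h x] by linarith
      also have "\<dots> \<le> \<delta>/2 * S x" using h S_nonneg[of x] by (intro mult_right_mono) auto
      finally show ?thesis by simp
    qed
    have "\<bar>g x * exp (ip d (addv \<theta>0 h) (s x))\<bar> = \<bar>g x\<bar> * E0 x * exp (ip d h (s x))"
      by (simp add: ip_addv exp_add abs_mult)
    also have "\<dots> \<le> (1 + S x)^3 * E0 x * exp (\<delta> * S x / 2)"
    proof -
      have "\<bar>g x\<bar> \<le> (1 + S x)^3"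
      proof -
        have "(1 + S x)^1 \<le> (1 + S x)^3" by (rule power_increasing) (use S_nonneg[of x] in auto)
        thus ?thesis using g(2) x by auto
      qed
      thus ?thesis using u by (intro mult_mono) auto
    qed
    also have "\<dots> \<le> K * (E0 x * exp (\<delta> * S x))"
    proof -
      have "(1 + S x)^3 * E0 x * exp (\<delta> * S x / 2) = E0 x * ((1 + S x)^3 * exp (\<delta> * S x / 2))" by (simp add: mult_ac)
      also have "\<dots> \<le> E0 x * (K * exp (\<delta> * S x))" by (rule mult_left_mono[OF bound_poly]) simp
      finally show ?thesis by (simp add: mult_ac)
    qed
    finally show "\<bar>g x * exp (ip d (addv \<theta>0 h) (s x))\<bar> \<le> K * (E0 x * exp (\<delta> * S x))" .
  qed
qed

lemma int_g_p:
  assumes g: "g \<in> borel_measurable M" "\<forall>x\<in>space M. \<bar>g x\<bar> \<le> 1 + S x" and p: "p < d"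
  shows "integrable M (\<lambda>x. g x * s x p * E0 x)"
proof (rule dom_int)
  show "(\<lambda>x. g x * s x p * E0 x) \<in> borel_measurable M"
    using g(1) meas p measE0 by (intro borel_measurable_times) auto
  show "\<forall>x\<in>space M. \<bar>g x * s x p * E0 x\<bar> \<le> K * (E0 x * exp (\<delta> * S x))"
  proof
    fix x assume x: "x \<in> space M"
    have sp: "\<bar>s x p\<bar> \<le> 1 + S x" using member_le_sum[of p "{..<d}" "\<lambda>k. \<bar>s x k\<bar>"] p by auto
    have "\<bar>g x * s x p\<bar> \<le> (1 + S x) * (1 + S x)" unfolding abs_mult
      using g(2) x sp by (intro mult_mono) auto
    also have "\<dots> \<le> (1 + S x)^3 * exp (\<delta> * S x / 2)"
    proof -
      have "(1 + S x)^2 \<le> (1 + S x)^3" by (rule power_increasing) (use S_nonneg[of x] in auto)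
      also have "\<dots> \<le> (1 + S x)^3 * exp (\<delta> * S x / 2)"
      proof -
        have "1 \<le> exp (\<delta> * S x / 2)" using dpos S_nonneg[of x] by simp
        moreover have "0 \<le> (1 + S x)^3" using S_nonneg[of x] by simp
        ultimately show ?thesis using mult_left_mono[of 1 "exp (\<delta> * S x / 2)" "(1 + S x)^3"] by simp
      qed
      finally show ?thesis by (simp add: power2_eq_square)
    qed
    also have "\<dots> \<le> K * exp (\<delta> * S x)" by (rule bound_poly)
    finally have "\<bar>g x * s x p\<bar> * E0 x \<le> K * exp (\<delta> * S x) * E0 x" by (intro mult_right_mono) auto
    thus "\<bar>g x * s x p * E0 x\<bar> \<le> K * (E0 x * exp (\<delta> * S x))" by (simp add: abs_mult mult_ac)
  qed
qed

lemma int_g0: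
  assumes g: "g \<in> borel_measurable M" "\<forall>x\<in>space M. \<bar>g x\<bar> \<le> 1 + S x"
  shows "integrable M (\<lambda>x. g x * E0 x)"
  using int_g_h[OF g, of "\<lambda>_. 0"] dpos by (simp add: addv_def n1_def)

lemma rem_est:
  assumes g: "g \<in> borel_measurable M" "\<forall>x\<in>space M. \<bar>g x\<bar> \<le> 1 + S x" and h: "n1 d h \<le> \<delta>/2"
  shows "\<bar>(\<integral>x. g x * exp (ip d (addv \<theta>0 h) (s x)) \<partial>M) - (\<integral>x. g x * E0 x \<partial>M)
          - (\<Sum>p<d. h p * (\<integral>x. g x * s x p * E0 x \<partial>M))\<bar> \<le> K * II * (n1 d h)\<^sup>2"
proof -
  have ip: "integrable M (\<lambda>x. g x * s x p * E0 x)" if "p \<in> {..<d}" for p using int_g_p[OF g] that by auto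
  have eq: "(\<integral>x. g x * exp (ip d (addv \<theta>0 h) (s x)) \<partial>M) - (\<integral>x. g x * E0 x \<partial>M)
          - (\<Sum>p<d. h p * (\<integral>x. g x * s x p * E0 x \<partial>M))
     = (\<integral>x. g x * exp (ip d (addv \<theta>0 h) (s x)) - g x * E0 x - (\<Sum>p<d. h p * (g x * s x p * E0 x)) \<partial>M)"
  proof -
    have "(\<Sum>p<d. h p * (\<integral>x. g x * s x p * E0 x \<partial>M)) = (\<integral>x. (\<Sum>p<d. h p * (g x * s x p * E0 x)) \<partial>M)"
      by (subst Bochner_Integration.integral_sum) (use ip in auto)
    moreover have "integrable M (\<lambda>x. \<Sum>p<d. h p * (g x * s x p * E0 x))"
      using ip by (intro Bochner_Integration.integrable_sum) auto
    ultimately show ?thesis using int_g_h[OF g h] int_g0[OF g]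
      by (simp add: Bochner_Integration.integral_diff)
  qed
  have pw: "\<bar>g x * exp (ip d (addv \<theta>0 h) (s x)) - g x * E0 x - (\<Sum>p<d. h p * (g x * s x p * E0 x))\<bar>
      \<le> (n1 d h)\<^sup>2 * K * (E0 x * exp (\<delta> * S x))" if x: "x \<in> space M" for x
  proof -
    define u where "u = ip d h (s x)"
    have "(\<Sum>p<d. h p * (g x * s x p * E0 x)) = g x * E0 x * u"
      unfolding u_def ip_def by (simp add: sum_distrib_left sum_distrib_right mult_ac)
    hence eqx: "g x * exp (ip d (addv \<theta>0 h) (s x)) - g x * E0 x - (\<Sum>p<d. h p * (g x * s x p * E0 x))
          = g x * E0 x * (exp u - 1 - u)" unfolding u_def by (simp add: ip_addv exp_add algebra_simps)
    have "\<bar>g x * E0 x * (exp u - 1 - u)\<bar> = \<bar>g x\<bar> * E0 x * \<bar>exp u - 1 - u\<bar>" by (simp add: abs_mult)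
    also have "\<dots> \<le> (1 + S x) * E0 x * ((n1 d h)\<^sup>2 * (S x)\<^sup>2 * exp (\<delta> * S x / 2))"
    proof (intro mult_mono)
      have ub: "\<bar>u\<bar> \<le> n1 d h * S x" unfolding u_def by (rule ip_bound_S)
      have "\<bar>exp u - 1 - u\<bar> \<le> u\<^sup>2 * exp \<bar>u\<bar>" by (rule exp_taylor2_bound)
      also have "\<dots> \<le> (n1 d h * S x)\<^sup>2 * exp (\<delta> * S x / 2)"
      proof (intro mult_mono)
        show "u\<^sup>2 \<le> (n1 d h * S x)\<^sup>2" using ub by (simp add: abs_le_square_iff[symmetric] abs_le_iff)
        have "n1 d h * S x \<le> \<delta>/2 * S x" using h S_nonneg[of x] by (intro mult_right_mono) auto
        thus "exp \<bar>u\<bar> \<le> exp (\<delta> * S x / 2)" using ub by simp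
      qed auto
      finally show "\<bar>exp u - 1 - u\<bar> \<le> (n1 d h)\<^sup>2 * (S x)\<^sup>2 * exp (\<delta> * S x / 2)" by (simp add: power_mult_distrib)
    qed (use g x in auto)
    also have "\<dots> = (n1 d h)\<^sup>2 * E0 x * ((1 + S x) * (S x)\<^sup>2 * exp (\<delta> * S x / 2))" by (simp add: mult_ac)
    also have "\<dots> \<le> (n1 d h)\<^sup>2 * E0 x * (K * exp (\<delta> * S x))"
    proof (rule mult_left_mono)
      have "(1 + S x) * (S x)\<^sup>2 \<le> (1 + S x)^3"
      proof -
        have "S x * S x \<le> (1 + S x) * (1 + S x)" using S_nonneg[of x] by (intro mult_mono) auto
        hence "(1 + S x) * (S x * S x) \<le> (1 + S x) * ((1 + S x) * (1 + S x))"
          using S_nonneg[of x] by (intro mult_left_mono) auto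
        thus ?thesis by (simp add: power2_eq_square power3_eq_cube mult_ac)
      qed
      hence "(1 + S x) * (S x)\<^sup>2 * exp (\<delta> * S x / 2) \<le> (1 + S x)^3 * exp (\<delta> * S x / 2)" by (intro mult_right_mono) auto
      thus "(1 + S x) * (S x)\<^sup>2 * exp (\<delta> * S x / 2) \<le> K * exp (\<delta> * S x)" using bound_poly[of x] by linarith
    qed simp
    finally have B: "\<bar>g x * E0 x * (exp u - 1 - u)\<bar> \<le> (n1 d h)\<^sup>2 * E0 x * (K * exp (\<delta> * S x))" .
    show ?thesis unfolding eqx using B by (simp add: mult_ac)
  qed
  have "\<bar>(\<integral>x. g x * exp (ip d (addv \<theta>0 h) (s x)) - g x * E0 x - (\<Sum>p<d. h p * (g x * s x p * E0 x)) \<partial>M)\<bar>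
      \<le> (\<integral>x. (n1 d h)\<^sup>2 * K * (E0 x * exp (\<delta> * S x)) \<partial>M)"
  proof (rule abs_int_bound)
    show "\<And>x. x \<in> space M \<Longrightarrow> \<bar>g x * exp (ip d (addv \<theta>0 h) (s x)) - g x * E0 x - (\<Sum>p<d. h p * (g x * s x p * E0 x))\<bar> \<le> (n1 d h)\<^sup>2 * K * (E0 x * exp (\<delta> * S x))"
      by (rule pw)
    have "integrable M (\<lambda>x. \<Sum>p<d. h p * (g x * s x p * E0 x))"
      using ip by (intro Bochner_Integration.integrable_sum) auto
    thus "integrable M (\<lambda>x. g x * exp (ip d (addv \<theta>0 h) (s x)) - g x * E0 x - (\<Sum>p<d. h p * (g x * s x p * E0 x)))"
      using int_g_h[OF g h] int_g0[OF g] by (intro Bochner_Integration.integrable_diff) auto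
    show "integrable M (\<lambda>x. (n1 d h)\<^sup>2 * K * (E0 x * exp (\<delta> * S x)))"
      using intD by (intro integrable_mult_right) auto
  qed
  also have "\<dots> = K * II * (n1 d h)\<^sup>2" unfolding II_def by (simp add: integral_mult_right_zero[symmetric] mult_ac del: integral_mult_right_zero)
  finally show ?thesis unfolding eq .
qed

end

context efam_pt begin

definition "b0 = (\<integral>x. E0 x \<partial>M)"
definition "ak k = (\<integral>x. s x k * E0 x \<partial>M)"
definition "Nkp k p = (\<integral>x. s x k * s x p * E0 x \<partial>M)"
definition "Np p = (\<integral>x. s x p * E0 x \<partial>M)"
definition "LL = (\<Sum>k<d. \<Sum>p<d. \<bar>Nkp k p\<bar>) + (\<Sum>p<d. \<bar>Np p\<bar>)"
definition "AA = (\<Sum>k<d. \<bar>ak k\<bar>)"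
definition "K2 = K * II"

lemma g1: "(\<lambda>x. 1::real) \<in> borel_measurable M" "\<forall>x\<in>space M. \<bar>1::real\<bar> \<le> 1 + S x"
  by (auto simp: S_nonneg)

lemma gk: "k < d \<Longrightarrow> (\<lambda>x. s x k) \<in> borel_measurable M" "k < d \<Longrightarrow> \<forall>x\<in>space M. \<bar>s x k\<bar> \<le> 1 + S x"
  using meas member_le_sum[of k "{..<d}" "\<lambda>k. \<bar>s x k\<bar>" for x] by (auto simp: add_increasing)

lemma LL_nonneg: "LL \<ge> 0" unfolding LL_def by (intro add_nonneg_nonneg sum_nonneg) auto
lemma K2_nonneg: "K2 \<ge> 0" unfolding K2_def using K_pos II_nonneg by simp

lemma sum_h_bound: "\<bar>\<Sum>p<d. h p * c p\<bar> \<le> n1 d h * (\<Sum>p<d. \<bar>c p\<bar>)"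
  using ip_bound[of d h c] unfolding ip_def .

lemma mean_est_pt:
  assumes b0: "b0 > 0"
  shows "\<exists>\<eta>>0. \<exists>C. \<forall>h. n1 d h < \<eta> \<longrightarrow> (\<forall>k<d.
     \<bar>ef_E M d s (addv \<theta>0 h) (\<lambda>x. s x k) - ef_E M d s \<theta>0 (\<lambda>x. s x k)
       - (\<Sum>p<d. h p * ef_cov M d s \<theta>0 s s k p)\<bar> \<le> C * (n1 d h)\<^sup>2)"
proof -
  define \<eta> where "\<eta> = min (\<delta>/2) (min 1 (b0 / (2 * (LL + K2 + 1))))"
  have \<eta>: "\<eta> > 0" unfolding \<eta>_def using dpos b0 LL_nonneg K2_nonneg by auto
  define C where "C = 2*(b0+AA)*LL*(LL+K2)/b0^3 + 2*(b0+AA)*K2/b0\<^sup>2"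
  show ?thesis
  proof (rule exI[of _ \<eta>], rule conjI[OF \<eta>], rule exI[of _ C], intro allI impI)
    fix h k assume h: "n1 d h < \<eta>" and k: "k < d"
    define n where "n = n1 d h"
    have n: "0 \<le> n" "n \<le> 1" "n \<le> \<delta>/2" using h n1_nonneg[of d h] unfolding n_def \<eta>_def by auto
    have small: "LL*n + K2*n\<^sup>2 \<le> b0/2"
    proof -
      have "K2*n\<^sup>2 \<le> K2*n" using n K2_nonneg by (intro mult_left_mono) (auto simp: power2_eq_square intro: mult_left_le_one_le)
      hence "LL*n + K2*n\<^sup>2 \<le> (LL+K2+1)*n" using n by (simp add: algebra_simps)
      also have "\<dots> \<le> (LL+K2+1) * (b0 / (2 * (LL + K2 + 1)))"
        using h LL_nonneg K2_nonneg unfolding n_def \<eta>_def by (intro mult_left_mono) auto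
      also have "\<dots> = b0/2"
      proof -
        have "LL + K2 + 1 > 0" using LL_nonneg K2_nonneg by simp
        thus ?thesis by (simp add: field_simps)
      qed
      finally show ?thesis .
    qed
    define A1 where "A1 = (\<Sum>p<d. h p * Nkp k p)"
    define B1 where "B1 = (\<Sum>p<d. h p * Np p)"
    define Ra where "Ra = (\<integral>x. s x k * exp (ip d (addv \<theta>0 h) (s x)) \<partial>M) - ak k - A1"
    define Rb where "Rb = (\<integral>x. exp (ip d (addv \<theta>0 h) (s x)) \<partial>M) - b0 - B1"
    have hRa: "\<bar>Ra\<bar> \<le> K2*n\<^sup>2"
      using rem_est[OF gk(1)[OF k] gk(2)[OF k] n(3)[unfolded n_def]]
      unfolding Ra_def A1_def ak_def Nkp_def K2_def n_def by simp
    have hRb: "\<bar>Rb\<bar> \<le> K2*n\<^sup>2"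
      using rem_est[OF g1 n(3)[unfolded n_def]]
      unfolding Rb_def B1_def b0_def Np_def K2_def n_def by simp
    have hA: "\<bar>A1\<bar> \<le> LL*n"
    proof -
      have "\<bar>A1\<bar> \<le> n * (\<Sum>p<d. \<bar>Nkp k p\<bar>)" unfolding A1_def n_def by (rule sum_h_bound)
      also have "(\<Sum>p<d. \<bar>Nkp k p\<bar>) \<le> (\<Sum>k<d. \<Sum>p<d. \<bar>Nkp k p\<bar>)"
        using k by (intro member_le_sum[where f="\<lambda>k. \<Sum>p<d. \<bar>Nkp k p\<bar>"]) (auto intro: sum_nonneg)
      hence "n * (\<Sum>p<d. \<bar>Nkp k p\<bar>) \<le> n * LL" unfolding LL_def using n
        by (intro mult_left_mono) (auto intro: order.trans add_increasing2 sum_nonneg)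
      finally show ?thesis by (simp add: mult_ac)
    qed
    have hB: "\<bar>B1\<bar> \<le> LL*n"
    proof -
      have "\<bar>B1\<bar> \<le> n * (\<Sum>p<d. \<bar>Np p\<bar>)" unfolding B1_def n_def by (rule sum_h_bound)
      also have "\<dots> \<le> n * LL" unfolding LL_def using n
        by (intro mult_left_mono) (auto intro: add_increasing sum_nonneg)
      finally show ?thesis by (simp add: mult_ac)
    qed
    have R: "\<bar>(ak k + A1 + Ra)/(b0 + B1 + Rb) - ak k/b0 - (A1*b0 - ak k*B1)/b0\<^sup>2\<bar>
      \<le> (2*(b0+\<bar>ak k\<bar>)*LL*(LL+K2)/b0^3 + 2*(b0+\<bar>ak k\<bar>)*K2/b0\<^sup>2) * n\<^sup>2"
      by (rule ratio_est[OF b0 hA hB hRa hRb n(1,2) small LL_nonneg K2_nonneg])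
    have "(2*(b0+\<bar>ak k\<bar>)*LL*(LL+K2)/b0^3 + 2*(b0+\<bar>ak k\<bar>)*K2/b0\<^sup>2) \<le> C"
    proof -
      have "\<bar>ak k\<bar> \<le> AA" unfolding AA_def using k by (intro member_le_sum[where f="\<lambda>k. \<bar>ak k\<bar>"]) auto
      thus ?thesis unfolding C_def using b0 LL_nonneg K2_nonneg
        by (intro add_mono divide_right_mono mult_right_mono mult_left_mono) auto
    qed
    hence R2: "\<bar>(ak k + A1 + Ra)/(b0 + B1 + Rb) - ak k/b0 - (A1*b0 - ak k*B1)/b0\<^sup>2\<bar> \<le> C * n\<^sup>2"
      using R by (meson mult_right_mono order.trans zero_le_power2)
    have e1: "ef_E M d s (addv \<theta>0 h) (\<lambda>x. s x k) = (ak k + A1 + Ra)/(b0 + B1 + Rb)"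
      unfolding ef_E_ratio Ra_def Rb_def by simp
    have e2: "ef_E M d s \<theta>0 (\<lambda>x. s x k) = ak k / b0"
      unfolding ef_E_ratio ak_def b0_def ..
    have e3: "(\<Sum>p<d. h p * ef_cov M d s \<theta>0 s s k p) = (A1*b0 - ak k*B1)/b0\<^sup>2"
    proof -
      have cv: "ef_cov M d s \<theta>0 s s k p = Nkp k p / b0 - ak k / b0 * (Np p / b0)" for p
        unfolding ef_cov_def ef_E_ratio Nkp_def ak_def Np_def b0_def by simp
      have "(\<Sum>p<d. h p * ef_cov M d s \<theta>0 s s k p) = (\<Sum>p<d. h p * Nkp k p / b0 - ak k / b0^2 * (h p * Np p))"
      proof (rule sum.cong)
        fix p show "h p * ef_cov M d s \<theta>0 s s k p = h p * Nkp k p / b0 - ak k / b0^2 * (h p * Np p)"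
          unfolding cv using b0 by (simp add: field_simps power2_eq_square)
      qed simp
      also have "\<dots> = A1 / b0 - ak k / b0^2 * B1"
        unfolding A1_def B1_def by (simp add: sum_subtractf sum_divide_distrib sum_distrib_left)
      also have "\<dots> = (A1*b0 - ak k*B1)/b0\<^sup>2" using b0 by (simp add: field_simps power2_eq_square)
      finally show ?thesis .
    qed
    show "\<bar>ef_E M d s (addv \<theta>0 h) (\<lambda>x. s x k) - ef_E M d s \<theta>0 (\<lambda>x. s x k)
       - (\<Sum>p<d. h p * ef_cov M d s \<theta>0 s s k p)\<bar> \<le> C * (n1 d h)\<^sup>2"
      unfolding e1 e2 e3 using R2 n_def by simp
  qed
qed

end

lemma ef_Z_pos:
  assumes EF: "exp_family M d s" and d: "d > 0" and th: "\<theta> \<in> ef_Theta M d s"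
  shows "(\<integral>x. exp (ip d \<theta> (s x)) \<partial>M) > 0"
proof (rule ccontr)
  assume "\<not> ?thesis"
  moreover have "(\<integral>x. exp (ip d \<theta> (s x)) \<partial>M) \<ge> 0" by (rule integral_nonneg_AE) auto
  ultimately have z: "(\<integral>x. exp (ip d \<theta> (s x)) \<partial>M) = 0" by simp
  have "ef_dens M d s \<theta> = (\<lambda>x. 0)" unfolding ef_dens_def z by simp
  hence "ef_cov M d s \<theta> s s = (\<lambda>k l. 0)" unfolding ef_cov_def ef_E_def by simp
  moreover have "invertible_n d (ef_cov M d s \<theta> s s)" using EF th unfolding exp_family_def by blast
  ultimately obtain B where "mat_is_inv d (\<lambda>k l. 0) B" unfolding invertible_n_def by auto
  hence "mat_mult d (\<lambda>k l. 0) B 0 0 = 1" using d unfolding mat_is_inv_def by auto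
  thus False unfolding mat_mult_def by simp
qed

lemma exp_family_meas: "exp_family M d s \<Longrightarrow> \<forall>k<d. (\<lambda>x. s x k) \<in> borel_measurable M"
  unfolding exp_family_def by blast

lemma exp_family_open: "exp_family M d s \<Longrightarrow> open_in_vecs d (ef_Theta M d s)"
  unfolding exp_family_def by blast

lemma mean_est:
  assumes EF: "exp_family M d s" and d: "d > 0" and th: "\<theta>0 \<in> ef_Theta M d s"
  shows "\<exists>\<eta>>0. \<exists>C. \<forall>h\<in>vecs d. n1 d h < \<eta> \<longrightarrow> addv \<theta>0 h \<in> ef_Theta M d s \<and> (\<forall>k<d.
     \<bar>ef_E M d s (addv \<theta>0 h) (\<lambda>x. s x k) - ef_E M d s \<theta>0 (\<lambda>x. s x k)
       - (\<Sum>p<d. h p * ef_cov M d s \<theta>0 s s k p)\<bar> \<le> C * (n1 d h)\<^sup>2)"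
proof -
  obtain \<delta> where \<delta>: "\<delta> > 0" "integrable M (\<lambda>x. exp (ip d \<theta>0 (s x)) * exp (\<delta> * (\<Sum>k<d. \<bar>s x k\<bar>)))"
    using dom_setup[OF exp_family_meas[OF EF] exp_family_open[OF EF] th d] by blast
  interpret efam_pt M d s \<theta>0 \<delta> using \<delta> exp_family_meas[OF EF] by unfold_locales auto
  have b0: "b0 > 0" unfolding b0_def using ef_Z_pos[OF EF d th] .
  obtain \<eta>1 C where \<eta>1: "\<eta>1 > 0" and C: "\<forall>h. n1 d h < \<eta>1 \<longrightarrow> (\<forall>k<d.
     \<bar>ef_E M d s (addv \<theta>0 h) (\<lambda>x. s x k) - ef_E M d s \<theta>0 (\<lambda>x. s x k)
       - (\<Sum>p<d. h p * ef_cov M d s \<theta>0 s s k p)\<bar> \<le> C * (n1 d h)\<^sup>2)"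
    using mean_est_pt[OF b0] by blast
  obtain e where e: "e > 0" "\<forall>h\<in>vecs d. n1 d h < e \<longrightarrow> addv \<theta>0 h \<in> ef_Theta M d s"
    using open_ball_vecs[OF exp_family_open[OF EF] th] by blast
  show ?thesis
    by (rule exI[of _ "min \<eta>1 e"]) (use \<eta>1 e C in auto)
qed

lemma mean_lip:
  assumes EF: "exp_family M d s" and d: "d > 0" and th: "\<theta>0 \<in> ef_Theta M d s"
  shows "\<exists>\<eta>>0. \<exists>C. \<forall>h\<in>vecs d. n1 d h < \<eta> \<longrightarrow> addv \<theta>0 h \<in> ef_Theta M d s \<and> (\<forall>k<d.
     \<bar>ef_E M d s (addv \<theta>0 h) (\<lambda>x. s x k) - ef_E M d s \<theta>0 (\<lambda>x. s x k)\<bar> \<le> C * n1 d h)"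
proof -
  obtain \<eta> C where \<eta>: "\<eta> > 0" and C: "\<forall>h\<in>vecs d. n1 d h < \<eta> \<longrightarrow> addv \<theta>0 h \<in> ef_Theta M d s \<and> (\<forall>k<d.
     \<bar>ef_E M d s (addv \<theta>0 h) (\<lambda>x. s x k) - ef_E M d s \<theta>0 (\<lambda>x. s x k)
       - (\<Sum>p<d. h p * ef_cov M d s \<theta>0 s s k p)\<bar> \<le> C * (n1 d h)\<^sup>2)"
    using mean_est[OF assms] by blast
  define L where "L = (\<Sum>k<d. \<Sum>p<d. \<bar>ef_cov M d s \<theta>0 s s k p\<bar>)"
  define \<eta>' where "\<eta>' = min \<eta> 1"
  show ?thesis
  proof (rule exI[of _ \<eta>'], rule conjI, use \<eta> in \<open>simp add: \<eta>'_def\<close>, rule exI[of _ "L + \<bar>C\<bar>"], intro ballI impI conjI allI)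
    fix h assume h: "h \<in> vecs d" "n1 d h < \<eta>'"
    show "addv \<theta>0 h \<in> ef_Theta M d s" using C h by (auto simp: \<eta>'_def)
    fix k assume k: "k < d"
    have c: "\<bar>ef_E M d s (addv \<theta>0 h) (\<lambda>x. s x k) - ef_E M d s \<theta>0 (\<lambda>x. s x k)
       - (\<Sum>p<d. h p * ef_cov M d s \<theta>0 s s k p)\<bar> \<le> C * (n1 d h)\<^sup>2" using C h k by (auto simp: \<eta>'_def)
    have l: "\<bar>\<Sum>p<d. h p * ef_cov M d s \<theta>0 s s k p\<bar> \<le> n1 d h * L"
    proof -
      have "\<bar>\<Sum>p<d. h p * ef_cov M d s \<theta>0 s s k p\<bar> \<le> n1 d h * (\<Sum>p<d. \<bar>ef_cov M d s \<theta>0 s s k p\<bar>)"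
        using ip_bound[of d h "ef_cov M d s \<theta>0 s s k"] unfolding ip_def .
      also have "\<dots> \<le> n1 d h * L" unfolding L_def using k n1_nonneg[of d h]
        by (intro mult_left_mono member_le_sum[where f="\<lambda>k. \<Sum>p<d. \<bar>ef_cov M d s \<theta>0 s s k p\<bar>"]) (auto intro: sum_nonneg)
      finally show ?thesis .
    qed
    have "C * (n1 d h)\<^sup>2 \<le> \<bar>C\<bar> * n1 d h"
    proof -
      have "(n1 d h)\<^sup>2 \<le> n1 d h" using h n1_nonneg[of d h] by (auto simp: power2_eq_square \<eta>'_def intro: mult_left_le_one_le)
      hence "\<bar>C\<bar> * (n1 d h)\<^sup>2 \<le> \<bar>C\<bar> * n1 d h" by (intro mult_left_mono) auto
      moreover have "C * (n1 d h)\<^sup>2 \<le> \<bar>C\<bar> * (n1 d h)\<^sup>2" by (intro mult_right_mono) auto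
      ultimately show ?thesis by linarith
    qed
    thus "\<bar>ef_E M d s (addv \<theta>0 h) (\<lambda>x. s x k) - ef_E M d s \<theta>0 (\<lambda>x. s x k)\<bar> \<le> (L + \<bar>C\<bar>) * n1 d h"
      using c l by (simp add: algebra_simps abs_le_iff)
  qed
qed

lemma open_fun_box:
  fixes T :: "(nat \<Rightarrow> real) set"
  assumes "open T" "x \<in> T"
  shows "\<exists>r>0. \<exists>I. finite I \<and> (\<forall>y. (\<forall>i\<in>I. \<bar>y i - x i\<bar> < r) \<longrightarrow> y \<in> T)"
proof -
  obtain U where U: "finite {i. U i \<noteq> UNIV}" "\<forall>i. open (U i)" "x \<in> Pi\<^sub>E UNIV U" "Pi\<^sub>E UNIV U \<subseteq> T"
    using assms unfolding open_fun_def openin_product_topology_alt by force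
  define I where "I = {i. U i \<noteq> UNIV}"
  have "\<forall>i\<in>I. \<exists>r>0. \<forall>y. \<bar>y - x i\<bar> < r \<longrightarrow> y \<in> U i"
  proof
    fix i assume "i \<in> I"
    have "x i \<in> U i" using U(3) by auto
    then obtain e where "e > 0" "\<forall>y. dist y (x i) < e \<longrightarrow> y \<in> U i"
      using U(2) unfolding open_dist by blast
    thus "\<exists>r>0. \<forall>y. \<bar>y - x i\<bar> < r \<longrightarrow> y \<in> U i" by (auto simp: dist_real_def)
  qed
  then obtain rr where rr: "\<forall>i\<in>I. rr i > 0 \<and> (\<forall>y. \<bar>y - x i\<bar> < rr i \<longrightarrow> y \<in> U i)"
    by metis
  define r where "r = Min (insert 1 (rr ` I))"
  have fin: "finite I" using U(1) unfolding I_def .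
  have r: "r > 0" unfolding r_def using fin rr by (subst Min_gr_iff) auto
  have rle: "r \<le> rr i" if "i \<in> I" for i unfolding r_def using fin that by (intro Min_le) auto
  show ?thesis
  proof (intro exI[of _ r] exI[of _ I] conjI allI impI r fin)
    fix y assume y: "\<forall>i\<in>I. \<bar>y i - x i\<bar> < r"
    have "y \<in> Pi\<^sub>E UNIV U"
    proof (simp add: PiE_iff, intro allI)
      fix i show "y i \<in> U i"
      proof (cases "i \<in> I")
        case True thus ?thesis using rr y rle[OF True] by fastforce
      next
        case False thus ?thesis unfolding I_def by auto
      qed
    qed
    thus "y \<in> T" using U(4) by blast
  qed
qed

lemma box_open: "open {y::nat\<Rightarrow>real. \<forall>k<d. \<bar>y k - x k\<bar> < \<rho>}"
proof -
  have "{y::nat\<Rightarrow>real. \<forall>k<d. \<bar>y k - x k\<bar> < \<rho>} = {f. \<forall>i\<in>{..<d}. f (id i) \<in> ball (x i) \<rho>}"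
    by (auto simp: dist_real_def abs_minus_commute)
  thus ?thesis using product_topology_basis'[of "{..<d}" "\<lambda>i. ball (x i) \<rho>" id] by simp
qed

lemma box_n1:
  assumes "\<forall>k<d. \<bar>y k - x k\<bar> < \<rho>"
  shows "n1 d (\<lambda>k. y k - x k) \<le> real d * \<rho>"
proof -
  have "n1 d (\<lambda>k. y k - x k) \<le> (\<Sum>k<d. \<rho>)" unfolding n1_def using assms by (intro sum_mono) auto
  thus ?thesis by simp
qed

lemma addv_diff: "addv x (\<lambda>k. y k - x k) = y" unfolding addv_def by auto

lemma vecs_diff: "x \<in> vecs d \<Longrightarrow> y \<in> vecs d \<Longrightarrow> (\<lambda>k. y k - x k) \<in> vecs d" unfolding vecs_def by auto

lemma ef_mean_vecs: "ef_mean M d s \<theta> \<in> vecs d" unfolding ef_mean_def vecs_def by auto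

lemma Theta_vecs: "ef_Theta M d s \<subseteq> vecs d" unfolding ef_Theta_def by auto

lemma n1_diff_triangle: "n1 d (\<lambda>k. y k - z k) \<le> n1 d (\<lambda>k. y k - x k) + n1 d (\<lambda>k. x k - z k)"
  unfolding n1_def sum.distrib[symmetric] by (intro sum_mono) linarith

lemma mean_cont:
  assumes EF: "exp_family N d s" and d: "d > 0" and U: "U \<subseteq> ef_Theta N d s"
  shows "continuous_on U (ef_mean N d s)"
proof (rule continuous_on_coordinatewise_then_product)
  fix i
  show "continuous_on U (\<lambda>\<theta>. ef_mean N d s \<theta> i)"
  proof (cases "i < d")
    case False
    hence "(\<lambda>\<theta>. ef_mean N d s \<theta> i) = (\<lambda>\<theta>. 0)" unfolding ef_mean_def by auto
    show ?thesis unfolding \<open>(\<lambda>\<theta>. ef_mean N d s \<theta> i) = (\<lambda>\<theta>. 0)\<close> by (rule continuous_on_const)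
  next
    case i: True
    show ?thesis unfolding continuous_on_topological
    proof (intro ballI allI impI)
      fix x B assume x: "x \<in> U" and B: "open B" "ef_mean N d s x i \<in> B"
      obtain \<epsilon> where \<epsilon>: "\<epsilon> > 0" "\<forall>y. dist y (ef_mean N d s x i) < \<epsilon> \<longrightarrow> y \<in> B"
        using B unfolding open_dist by blast
      obtain \<eta> C where \<eta>: "\<eta> > 0" and C: "\<forall>h\<in>vecs d. n1 d h < \<eta> \<longrightarrow> addv x h \<in> ef_Theta N d s \<and> (\<forall>k<d.
         \<bar>ef_E N d s (addv x h) (\<lambda>z. s z k) - ef_E N d s x (\<lambda>z. s z k)\<bar> \<le> C * n1 d h)"
        using mean_lip[OF EF d] x U by blast
      define \<rho> where "\<rho> = min \<eta> (\<epsilon> / (\<bar>C\<bar> + 1)) / (real d + 1)"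
      have \<rho>: "\<rho> > 0" unfolding \<rho>_def using \<eta> \<epsilon> by auto
      show "\<exists>A. open A \<and> x \<in> A \<and> (\<forall>y\<in>U. y \<in> A \<longrightarrow> ef_mean N d s y i \<in> B)"
      proof (intro exI[of _ "{y. \<forall>k<d. \<bar>y k - x k\<bar> < \<rho>}"] conjI box_open ballI impI)
        show "x \<in> {y. \<forall>k<d. \<bar>y k - x k\<bar> < \<rho>}" using \<rho> by simp
        fix y assume y: "y \<in> U" "y \<in> {y. \<forall>k<d. \<bar>y k - x k\<bar> < \<rho>}"
        define h where "h = (\<lambda>k. y k - x k)"
        have hv: "h \<in> vecs d" unfolding h_def using x y U Theta_vecs[of N d s] by (intro vecs_diff) auto
        have "n1 d h \<le> real d * \<rho>" unfolding h_def using y(2) by (intro box_n1) auto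
        also have "\<dots> < min \<eta> (\<epsilon> / (\<bar>C\<bar> + 1))"
        proof -
          have "real d * \<rho> = min \<eta> (\<epsilon> / (\<bar>C\<bar> + 1)) * (real d / (real d + 1))" unfolding \<rho>_def by simp
          also have "\<dots> < min \<eta> (\<epsilon> / (\<bar>C\<bar> + 1)) * 1"
            using \<eta> \<epsilon> by (intro mult_strict_left_mono) auto
          finally show ?thesis by simp
        qed
        finally have hn: "n1 d h < \<eta>" "n1 d h < \<epsilon> / (\<bar>C\<bar> + 1)" by auto
        have "\<bar>ef_E N d s (addv x h) (\<lambda>z. s z i) - ef_E N d s x (\<lambda>z. s z i)\<bar> \<le> C * n1 d h"
          using C hv hn(1) i by blast
        also have "\<dots> \<le> \<bar>C\<bar> * n1 d h" using n1_nonneg[of d h] by (intro mult_right_mono) auto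
        also have "\<dots> \<le> (\<bar>C\<bar> + 1) * n1 d h" using n1_nonneg[of d h] by (intro mult_right_mono) auto
        also have "\<dots> < (\<bar>C\<bar> + 1) * (\<epsilon> / (\<bar>C\<bar> + 1))" using hn(2) by (intro mult_strict_left_mono) auto
        also have "\<dots> = \<epsilon>" by (simp add: field_simps add_pos_nonneg)
        finally have "dist (ef_mean N d s y i) (ef_mean N d s x i) < \<epsilon>"
          unfolding ef_mean_def h_def addv_diff using i by (simp add: dist_real_def)
        thus "ef_mean N d s y i \<in> B" using \<epsilon> by blast
      qed
    qed
  qed
qed

lemma Eucl_top: "Euclidean_space d = top_of_set (vecs d)"
  by (simp add: Euclidean_space_def euclidean_product_topology vecs_def)

lemma openin_Eucl_box:
  assumes U: "U \<subseteq> vecs d" and box: "\<forall>x\<in>U. \<exists>\<rho>>0. \<forall>y\<in>vecs d. (\<forall>k<d. \<bar>y k - x k\<bar> < \<rho>) \<longrightarrow> y \<in> U"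
  shows "openin (Euclidean_space d) U"
proof -
  obtain \<rho> where \<rho>: "\<forall>x\<in>U. \<rho> x > 0 \<and> (\<forall>y\<in>vecs d. (\<forall>k<d. \<bar>y k - x k\<bar> < \<rho> x) \<longrightarrow> y \<in> U)"
    using box by metis
  define T where "T = (\<Union>x\<in>U. {y. \<forall>k<d. \<bar>y k - x k\<bar> < \<rho> x})"
  have "open T" unfolding T_def by (intro open_UN ballI box_open)
  moreover have "U = vecs d \<inter> T"
  proof
    show "U \<subseteq> vecs d \<inter> T" using U \<rho> unfolding T_def by fastforce
    show "vecs d \<inter> T \<subseteq> U" using \<rho> unfolding T_def by blast
  qed
  ultimately show ?thesis unfolding Eucl_top openin_open by blast
qed

lemma inv_cont:
  fixes \<theta>t m :: "'b \<Rightarrow> nat \<Rightarrow> real"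
  assumes EF: "exp_family N d s" and d: "d > 0" and inj: "inj_on (ef_mean N d s) (ef_Theta N d s)"
    and th: "\<theta>0 \<in> ef_Theta N d s" and e: "e > 0"
    and ev: "eventually (\<lambda>t. \<theta>t t \<in> ef_Theta N d s \<and> ef_mean N d s (\<theta>t t) = m t) F"
    and m0: "ef_mean N d s \<theta>0 = m0"
    and mlim: "\<forall>i<d. filterlim (\<lambda>t. m t i) (nhds (m0 i)) F"
  shows "eventually (\<lambda>t. n1 d (\<lambda>k. \<theta>t t k - \<theta>0 k) < e) F"
proof -
  let ?f = "ef_mean N d s"
  define U where "U = ef_Theta N d s \<inter> {\<theta>. n1 d (\<lambda>k. \<theta> k - \<theta>0 k) < e}"
  have UT: "U \<subseteq> ef_Theta N d s" unfolding U_def by auto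
  have Uv: "U \<subseteq> vecs d" using UT Theta_vecs[of N d s] by (rule order.trans)
  have th0U: "\<theta>0 \<in> U" unfolding U_def using th e by (simp add: n1_def)
  have opU: "openin (Euclidean_space d) U"
  proof (rule openin_Eucl_box[OF Uv], intro ballI)
    fix x assume x: "x \<in> U"
    obtain \<epsilon> where \<epsilon>: "\<epsilon> > 0" "\<forall>h\<in>vecs d. n1 d h < \<epsilon> \<longrightarrow> addv x h \<in> ef_Theta N d s"
      using open_ball_vecs[OF exp_family_open[OF EF]] x UT by blast
    define r where "r = e - n1 d (\<lambda>k. x k - \<theta>0 k)"
    have r: "r > 0" using x unfolding U_def r_def by auto
    define \<rho> where "\<rho> = min \<epsilon> r / (real d + 1)"
    show "\<exists>\<rho>>0. \<forall>y\<in>vecs d. (\<forall>k<d. \<bar>y k - x k\<bar> < \<rho>) \<longrightarrow> y \<in> U"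
    proof (intro exI[of _ \<rho>] conjI ballI impI)
      show "\<rho> > 0" unfolding \<rho>_def using \<epsilon> r by auto
      fix y assume y: "y \<in> vecs d" "\<forall>k<d. \<bar>y k - x k\<bar> < \<rho>"
      have "n1 d (\<lambda>k. y k - x k) \<le> real d * \<rho>" by (rule box_n1[OF y(2)])
      also have "\<dots> < min \<epsilon> r"
      proof -
        have "real d * \<rho> = min \<epsilon> r * (real d / (real d + 1))" unfolding \<rho>_def by simp
        also have "\<dots> < min \<epsilon> r * 1" using \<epsilon> r by (intro mult_strict_left_mono) auto
        finally show ?thesis by simp
      qed
      finally have yn: "n1 d (\<lambda>k. y k - x k) < \<epsilon>" "n1 d (\<lambda>k. y k - x k) < r" by auto
      have xv: "x \<in> vecs d" using x Uv by auto
      have "addv x (\<lambda>k. y k - x k) \<in> ef_Theta N d s" using \<epsilon>(2) yn(1) vecs_diff[OF xv y(1)] by blast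
      hence "y \<in> ef_Theta N d s" unfolding addv_diff .
      moreover have "n1 d (\<lambda>k. y k - \<theta>0 k) < e"
        using n1_diff_triangle[of d y \<theta>0 x] yn(2) unfolding r_def by linarith
      ultimately show "y \<in> U" unfolding U_def by auto
    qed
  qed
  have cm: "continuous_map (subtopology (Euclidean_space d) U) (Euclidean_space d) ?f"
    unfolding cm_Euclidean_space_iff_continuous_on
  proof
    show "continuous_on (topspace (subtopology (Euclidean_space d) U)) ?f"
    proof (rule mean_cont[OF EF d])
      show "topspace (subtopology (Euclidean_space d) U) \<subseteq> ef_Theta N d s"
        unfolding topspace_subtopology using UT by blast
    qed
    show "?f \<in> topspace (subtopology (Euclidean_space d) U) \<rightarrow> topspace (Euclidean_space d)"
      unfolding topspace_Euclidean_space by (auto simp: ef_mean_def)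
  qed
  have "openin (Euclidean_space d) (?f ` U)"
    by (rule invariance_of_domain_Euclidean_space[OF opU cm inj_on_subset[OF inj UT]])
  then obtain T where T: "open T" "?f ` U = vecs d \<inter> T" unfolding Eucl_top openin_open by blast
  have "?f \<theta>0 \<in> ?f ` U" using th0U by (rule imageI)
  hence m0T: "m0 \<in> T" using T(2) m0 by simp
  obtain r I where rI: "r > 0" "finite I" "\<forall>y. (\<forall>i\<in>I. \<bar>y i - m0 i\<bar> < r) \<longrightarrow> y \<in> T"
    using open_fun_box[OF T(1) m0T] by blast
  have m0v: "m0 \<in> vecs d" using m0 ef_mean_vecs[of N d s \<theta>0] by simp
  have evI: "eventually (\<lambda>t. \<forall>i\<in>I. \<bar>m t i - m0 i\<bar> < r) F"
  proof (rule eventually_ball_finite[OF rI(2)], intro ballI)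
    fix i assume "i \<in> I"
    show "eventually (\<lambda>t. \<bar>m t i - m0 i\<bar> < r) F"
    proof (cases "i < d")
      case True
      from tendstoD[OF mlim[rule_format, OF True] rI(1)] show ?thesis by (simp add: dist_real_def)
    next
      case False
      show ?thesis using ev
      proof (rule eventually_mono)
        fix t assume "\<theta>t t \<in> ef_Theta N d s \<and> ef_mean N d s (\<theta>t t) = m t"
        hence "m t \<in> vecs d" using ef_mean_vecs[of N d s "\<theta>t t"] by simp
        thus "\<bar>m t i - m0 i\<bar> < r" using m0v False rI(1) unfolding vecs_def by auto
      qed
    qed
  qed
  show ?thesis using ev evI
  proof (rule eventually_elim2)
    fix t assume a: "\<theta>t t \<in> ef_Theta N d s \<and> ef_mean N d s (\<theta>t t) = m t" and b: "\<forall>i\<in>I. \<bar>m t i - m0 i\<bar> < r"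
    have mT: "m t \<in> T" using rI(3) b by simp
    have mv: "m t \<in> vecs d" using a ef_mean_vecs[of N d s "\<theta>t t"] by simp
    have "m t \<in> ?f ` U" unfolding T(2) using mT mv by (rule IntI[rotated])
    then obtain \<theta>' where \<theta>': "\<theta>' \<in> U" "?f \<theta>' = m t" by (rule imageE) (rule that, simp_all)
    have tT: "\<theta>t t \<in> ef_Theta N d s" using a by simp
    have th'T: "\<theta>' \<in> ef_Theta N d s" using \<theta>'(1) UT by (rule subsetD[rotated])
    have eqf: "?f (\<theta>t t) = ?f \<theta>'" using a \<theta>'(2) by simp
    have "\<theta>t t = \<theta>'" by (rule inj_onD[OF inj eqf tT th'T])
    thus "n1 d (\<lambda>k. \<theta>t t k - \<theta>0 k) < e" using \<theta>'(1) unfolding U_def by simp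
  qed
qed

lemma deriv_from_quad:
  fixes f :: "real \<Rightarrow> real"
  assumes "eventually (\<lambda>t. \<bar>f t - f 0 - t * D\<bar> \<le> K * t\<^sup>2) (at 0)"
  shows "(f has_real_derivative D) (at 0)"
proof -
  have "((\<lambda>t. (f t - f 0) / (t - 0) - D) \<longlongrightarrow> 0) (at 0)"
  proof (rule Lim_null_comparison)
    have nz: "eventually (\<lambda>t. t \<noteq> 0) (at (0::real))" by (simp add: eventually_at_filter)
    show "eventually (\<lambda>t. norm ((f t - f 0) / (t - 0) - D) \<le> \<bar>K\<bar> * \<bar>t\<bar>) (at 0)"
      using assms nz
    proof (rule eventually_elim2)
        fix t :: real assume a: "\<bar>f t - f 0 - t * D\<bar> \<le> K * t\<^sup>2" and t: "t \<noteq> 0"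
        have "(f t - f 0) / (t - 0) - D = (f t - f 0 - t * D) / t" using t by (simp add: field_simps)
        hence "norm ((f t - f 0) / (t - 0) - D) = \<bar>f t - f 0 - t * D\<bar> / \<bar>t\<bar>" by (simp add: abs_divide)
        also have "\<dots> \<le> K * t\<^sup>2 / \<bar>t\<bar>" using a t by (intro divide_right_mono) auto
        also have "\<dots> = K * \<bar>t\<bar>"
        proof -
          have "t\<^sup>2 = \<bar>t\<bar> * \<bar>t\<bar>" by (simp add: power2_eq_square)
          hence "K * t\<^sup>2 / \<bar>t\<bar> = K * \<bar>t\<bar> * (\<bar>t\<bar> / \<bar>t\<bar>)" by (simp only: mult_ac times_divide_eq_right)
          thus ?thesis using t by simp
        qed
        also have "\<dots> \<le> \<bar>K\<bar> * \<bar>t\<bar>" by (intro mult_right_mono) auto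
        finally show "norm ((f t - f 0) / (t - 0) - D) \<le> \<bar>K\<bar> * \<bar>t\<bar>" .
    qed
    show "((\<lambda>t. \<bar>K\<bar> * \<bar>t\<bar>) \<longlongrightarrow> 0) (at (0::real))"
    proof -
      have "((\<lambda>t. \<bar>K\<bar> * \<bar>t\<bar>) \<longlongrightarrow> \<bar>K\<bar> * \<bar>0\<bar>) (at (0::real))"
        by (intro tendsto_mult tendsto_const tendsto_rabs tendsto_ident_at)
      thus ?thesis by simp
    qed
  qed
  hence "((\<lambda>t. (f t - f 0) / (t - 0)) \<longlongrightarrow> D) (at 0)" by (rule LIM_zero_cancel)
  thus ?thesis by (simp add: has_field_derivative_iff)
qed

lemma mat_trunc_inv:
  assumes "mat_is_inv n A B"
  shows "mat_is_inv n A (\<lambda>k l. if k < n \<and> l < n then B k l else 0)"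
proof -
  have "mat_mult n A (\<lambda>k l. if k < n \<and> l < n then B k l else 0) k l = mat_mult n A B k l" if "l < n" for k l
    unfolding mat_mult_def using that by (intro sum.cong) auto
  moreover have "mat_mult n (\<lambda>k l. if k < n \<and> l < n then B k l else 0) A k l = mat_mult n B A k l" if "k < n" for k l
    unfolding mat_mult_def using that by (intro sum.cong) auto
  ultimately show ?thesis using assms unfolding mat_is_inv_def by auto
qed

lemma mat_inv_unique:
  assumes "mat_is_inv n A B1" "mat_is_inv n A B2" "k < n" "l < n"
  shows "B1 k l = B2 k l"
proof -
  have "B1 k l = (\<Sum>m<n. B1 k m * (if m = l then 1 else 0))"
    using assms(4) by (simp add: if_distrib[of "\<lambda>x. B1 k _ * x"] cong: if_cong)
  also have "\<dots> = (\<Sum>m<n. B1 k m * (\<Sum>p<n. A m p * B2 p l))"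
    using assms(2,4) unfolding mat_is_inv_def mat_mult_def by (intro sum.cong) auto
  also have "\<dots> = (\<Sum>p<n. (\<Sum>m<n. B1 k m * A m p) * B2 p l)"
    by (simp add: sum_distrib_left sum_distrib_right mult_ac) (rule sum.swap)
  also have "\<dots> = (\<Sum>p<n. (if k = p then 1 else 0) * B2 p l)"
    using assms(1,3) unfolding mat_is_inv_def mat_mult_def by (intro sum.cong) auto
  also have "\<dots> = B2 k l" using assms(3) by (simp add: if_distrib[of "\<lambda>x. x * B2 _ l"] cong: if_cong)
  finally show ?thesis .
qed

lemma mat_inv_is_inv:
  assumes "invertible_n n A"
  shows "mat_is_inv n A (mat_inv n A)"
proof -
  obtain B where B: "mat_is_inv n A B" using assms unfolding invertible_n_def by blast
  define B' where "B' = (\<lambda>k l. if k < n \<and> l < n then B k l else 0)"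
  have B': "mat_is_inv n A B' \<and> (\<forall>k l. n \<le> k \<or> n \<le> l \<longrightarrow> B' k l = 0)"
    using mat_trunc_inv[OF B] unfolding B'_def by auto
  have "mat_inv n A = B'"
    unfolding mat_inv_def
  proof (rule the_equality)
    show "mat_is_inv n A B' \<and> (\<forall>k l. n \<le> k \<or> n \<le> l \<longrightarrow> B' k l = 0)" by (rule B')
    fix C assume C: "mat_is_inv n A C \<and> (\<forall>k l. n \<le> k \<or> n \<le> l \<longrightarrow> C k l = 0)"
    show "C = B'"
    proof (intro ext)
      fix k l show "C k l = B' k l"
        using C B' mat_inv_unique[of n A C B' k l] by (cases "k < n \<and> l < n") auto
    qed
  qed
  thus ?thesis using B' by simp
qed

lemma sum_abs_le_M:
  fixes a b :: "nat \<Rightarrow> real"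
  assumes "\<forall>j<d. \<bar>b j\<bar> \<le> M"
  shows "\<bar>\<Sum>j<d. a j * b j\<bar> \<le> (\<Sum>j<d. \<bar>a j\<bar>) * M"
proof -
  have "\<bar>\<Sum>j<d. a j * b j\<bar> \<le> (\<Sum>j<d. \<bar>a j\<bar> * \<bar>b j\<bar>)" by (rule order.trans[OF sum_abs]) (simp add: abs_mult)
  also have "\<dots> \<le> (\<Sum>j<d. \<bar>a j\<bar> * M)" using assms by (intro sum_mono mult_left_mono) auto
  finally show ?thesis by (simp add: sum_distrib_right)
qed

lemma inv_apply:
  fixes H Hinv :: "nat \<Rightarrow> nat \<Rightarrow> real"
  assumes HI: "mat_is_inv d H Hinv" and k: "k < d"
  shows "(\<Sum>j<d. Hinv k j * (\<Sum>p<d. D p * H j p)) = D k"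
proof -
  have "(\<Sum>j<d. Hinv k j * (\<Sum>p<d. D p * H j p)) = (\<Sum>p<d. D p * (\<Sum>j<d. Hinv k j * H j p))"
    by (simp add: sum_distrib_left sum_distrib_right mult_ac) (rule sum.swap)
  also have "\<dots> = (\<Sum>p<d. D p * (if k = p then 1 else 0))"
    using HI k unfolding mat_is_inv_def mat_mult_def by (intro sum.cong) auto
  also have "\<dots> = D k" using k by (simp add: if_distrib[of "\<lambda>x. D _ * x"] cong: if_cong)
  finally show ?thesis .
qed

lemma inv_deriv:
  fixes \<theta>t m :: "real \<Rightarrow> nat \<Rightarrow> real" and c :: "nat \<Rightarrow> real"
  assumes EF: "exp_family N d s" and d: "d > 0" and inj: "inj_on (ef_mean N d s) (ef_Theta N d s)"
    and th: "\<theta>0 \<in> ef_Theta N d s"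
    and ev: "eventually (\<lambda>t. \<theta>t t \<in> ef_Theta N d s \<and> ef_mean N d s (\<theta>t t) = m t) (at 0)"
    and at0: "\<theta>t 0 = \<theta>0" and m0: "ef_mean N d s \<theta>0 = m 0"
    and mest: "eventually (\<lambda>t. \<forall>k<d. \<bar>m t k - m 0 k - t * c k\<bar> \<le> C' * t\<^sup>2) (at 0)"
    and HI: "mat_is_inv d (ef_cov N d s \<theta>0 s s) Hinv"
    and k: "k < d"
  shows "((\<lambda>t. \<theta>t t k) has_real_derivative (\<Sum>j<d. Hinv k j * c j)) (at 0)"
proof -
  define H where "H = ef_cov N d s \<theta>0 s s"
  obtain \<eta> C where \<eta>: "\<eta> > 0" and C: "\<forall>h\<in>vecs d. n1 d h < \<eta> \<longrightarrow> addv \<theta>0 h \<in> ef_Theta N d s \<and> (\<forall>k<d.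
     \<bar>ef_E N d s (addv \<theta>0 h) (\<lambda>x. s x k) - ef_E N d s \<theta>0 (\<lambda>x. s x k)
       - (\<Sum>p<d. h p * H k p)\<bar> \<le> C * (n1 d h)\<^sup>2)"
    using mean_est[OF EF d th] unfolding H_def by blast
  define C0 where "C0 = \<bar>C\<bar>"
  define C1 where "C1 = \<bar>C'\<bar>"
  define A where "A = (\<Sum>k<d. \<Sum>j<d. \<bar>Hinv k j\<bar>)"
  define v where "v k = (\<Sum>j<d. Hinv k j * c j)" for k
  define B where "B = n1 d v"
  define Kd where "Kd = 2*B + 2*real d*A*C1"
  define K2 where "K2 = A*(C0*Kd\<^sup>2 + C1)"
  have A0: "A \<ge> 0" unfolding A_def by (intro sum_nonneg) auto
  have C00: "C0 \<ge> 0" "C1 \<ge> 0" unfolding C0_def C1_def by auto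
  have Ak: "(\<Sum>j<d. \<bar>Hinv k' j\<bar>) \<le> A" if "k' < d" for k'
    unfolding A_def using that by (intro member_le_sum[where f="\<lambda>k. \<Sum>j<d. \<bar>Hinv k j\<bar>"]) (auto intro: sum_nonneg)
  define e0 where "e0 = min \<eta> (1 / (2*real d*A*C0 + 1))"
  have pos: "2*real d*A*C0 + 1 > 0" using A0 C00 by (intro add_nonneg_pos mult_nonneg_nonneg) auto
  have e0: "e0 > 0" unfolding e0_def using \<eta> pos by auto
  have mlim: "\<forall>i<d. filterlim (\<lambda>t. m t i) (nhds (m 0 i)) (at 0)"
  proof (intro allI impI)
    fix i assume i: "i < d"
    have "((\<lambda>t. m t i - m 0 i) \<longlongrightarrow> 0) (at 0)"
    proof (rule Lim_null_comparison)
      show "eventually (\<lambda>t. norm (m t i - m 0 i) \<le> \<bar>t\<bar> * \<bar>c i\<bar> + C1 * t\<^sup>2) (at 0)"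
        using mest
      proof (rule eventually_mono)
        fix t assume "\<forall>k<d. \<bar>m t k - m 0 k - t * c k\<bar> \<le> C' * t\<^sup>2"
        hence "\<bar>m t i - m 0 i - t * c i\<bar> \<le> C' * t\<^sup>2" using i by blast
        moreover have "C' * t\<^sup>2 \<le> C1 * t\<^sup>2" unfolding C1_def by (intro mult_right_mono) auto
        moreover have "\<bar>m t i - m 0 i\<bar> \<le> \<bar>m t i - m 0 i - t * c i\<bar> + \<bar>t * c i\<bar>"
          using abs_triangle_ineq[of "m t i - m 0 i - t * c i" "t * c i"] by simp
        ultimately show "norm (m t i - m 0 i) \<le> \<bar>t\<bar> * \<bar>c i\<bar> + C1 * t\<^sup>2"
          by (simp add: abs_mult)
      qed
      have "((\<lambda>t. \<bar>t\<bar> * \<bar>c i\<bar> + C1 * t\<^sup>2) \<longlongrightarrow> \<bar>0\<bar> * \<bar>c i\<bar> + C1 * 0\<^sup>2) (at (0::real))"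
        by (intro tendsto_add tendsto_mult tendsto_const tendsto_rabs tendsto_ident_at tendsto_power)
      thus "((\<lambda>t. \<bar>t\<bar> * \<bar>c i\<bar> + C1 * t\<^sup>2) \<longlongrightarrow> 0) (at (0::real))" by simp
    qed
    thus "filterlim (\<lambda>t. m t i) (nhds (m 0 i)) (at 0)" by (rule LIM_zero_cancel)
  qed
  have evn: "eventually (\<lambda>t. n1 d (\<lambda>k. \<theta>t t k - \<theta>0 k) < e0) (at 0)"
    by (rule inv_cont[OF EF d inj th e0 ev m0 mlim])
  have ev1: "eventually (\<lambda>t. \<bar>t\<bar> < 1) (at (0::real))"
    unfolding eventually_at by (intro exI[of _ 1]) (auto simp: dist_real_def)
  have quad: "eventually (\<lambda>t. \<bar>\<theta>t t k - \<theta>t 0 k - t * v k\<bar> \<le> K2 * t\<^sup>2) (at 0)"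
    using ev mest evn ev1
  proof (eventually_elim)
    case (elim t)
    hence tT: "\<theta>t t \<in> ef_Theta N d s" and mt: "ef_mean N d s (\<theta>t t) = m t"
      and me: "\<forall>k<d. \<bar>m t k - m 0 k - t * c k\<bar> \<le> C' * t\<^sup>2"
      and nD: "n1 d (\<lambda>k. \<theta>t t k - \<theta>0 k) < e0" and t1: "\<bar>t\<bar> < 1" by auto
    define D where "D = (\<lambda>k. \<theta>t t k - \<theta>0 k)"
    define n where "n = n1 d D"
    have Dv: "D \<in> vecs d" unfolding D_def using tT th Theta_vecs[of N d s] by (intro vecs_diff) auto
    have n\<eta>: "n1 d D < \<eta>" using nD unfolding D_def e0_def by simp
    have n0: "n \<ge> 0" unfolding n_def by (rule n1_nonneg)
    have ne: "n < 1 / (2*real d*A*C0 + 1)" using nD unfolding n_def D_def e0_def by simp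
    define w where "w j = (\<Sum>p<d. D p * H j p) - t * c j" for j
    have wb: "\<forall>j<d. \<bar>w j\<bar> \<le> C0 * n\<^sup>2 + C1 * t\<^sup>2"
    proof (intro allI impI)
      fix j assume j: "j < d"
      have "\<bar>ef_E N d s (addv \<theta>0 D) (\<lambda>x. s x j) - ef_E N d s \<theta>0 (\<lambda>x. s x j) - (\<Sum>p<d. D p * H j p)\<bar> \<le> C * n\<^sup>2"
        using C Dv n\<eta> j unfolding n_def by blast
      moreover have "ef_E N d s (addv \<theta>0 D) (\<lambda>x. s x j) = m t j"
      proof -
        have "ef_mean N d s (\<theta>t t) j = m t j" using mt by simp
        thus ?thesis using j unfolding D_def addv_diff ef_mean_def by simp
      qed
      moreover have "ef_E N d s \<theta>0 (\<lambda>x. s x j) = m 0 j"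
      proof -
        have "ef_mean N d s \<theta>0 j = m 0 j" using m0 by simp
        thus ?thesis using j unfolding ef_mean_def by simp
      qed
      moreover have "\<bar>m t j - m 0 j - t * c j\<bar> \<le> C1 * t\<^sup>2"
      proof -
        have "C' * t\<^sup>2 \<le> \<bar>C'\<bar> * t\<^sup>2" by (intro mult_right_mono) auto
        thus ?thesis using me j unfolding C1_def by fastforce
      qed
      moreover have "C * n\<^sup>2 \<le> C0 * n\<^sup>2" unfolding C0_def by (intro mult_right_mono) auto
      ultimately show "\<bar>w j\<bar> \<le> C0 * n\<^sup>2 + C1 * t\<^sup>2" unfolding w_def by (simp add: abs_le_iff)
    qed
    have Dk: "\<bar>D k' - t * v k'\<bar> \<le> A * (C0 * n\<^sup>2 + C1 * t\<^sup>2)" if k': "k' < d" for k'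
    proof -
      have "D k' - t * v k' = (\<Sum>j<d. Hinv k' j * w j)"
        unfolding w_def v_def right_diff_distrib sum_subtractf inv_apply[OF HI[folded H_def] k']
        by (simp add: sum_distrib_left mult_ac)
      also have "\<bar>\<dots>\<bar> \<le> (\<Sum>j<d. \<bar>Hinv k' j\<bar>) * (C0 * n\<^sup>2 + C1 * t\<^sup>2)" by (rule sum_abs_le_M[OF wb])
      also have "\<dots> \<le> A * (C0 * n\<^sup>2 + C1 * t\<^sup>2)" using Ak[OF k'] C00 by (intro mult_right_mono) auto
      finally show ?thesis .
    qed
    have nsum: "n = (\<Sum>k'<d. \<bar>D k'\<bar>)" unfolding n_def n1_def ..
    have "(\<Sum>k'<d. \<bar>D k'\<bar>) \<le> (\<Sum>k'<d. \<bar>t\<bar> * \<bar>v k'\<bar> + A * (C0 * n\<^sup>2 + C1 * t\<^sup>2))"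
    proof (rule sum_mono)
      fix k' assume "k' \<in> {..<d}"
      hence "\<bar>D k' - t * v k'\<bar> \<le> A * (C0 * n\<^sup>2 + C1 * t\<^sup>2)" using Dk by auto
      moreover have "\<bar>D k'\<bar> \<le> \<bar>D k' - t * v k'\<bar> + \<bar>t * v k'\<bar>"
        using abs_triangle_ineq[of "D k' - t * v k'" "t * v k'"] by simp
      ultimately show "\<bar>D k'\<bar> \<le> \<bar>t\<bar> * \<bar>v k'\<bar> + A * (C0 * n\<^sup>2 + C1 * t\<^sup>2)" by (simp add: abs_mult)
    qed
    also have "\<dots> = \<bar>t\<bar> * B + real d * A * C0 * n\<^sup>2 + real d * A * C1 * t\<^sup>2"
      unfolding B_def n1_def by (simp add: sum.distrib sum_distrib_left algebra_simps)
    finally have nb0: "(\<Sum>k'<d. \<bar>D k'\<bar>) \<le> \<bar>t\<bar> * B + real d * A * C0 * n\<^sup>2 + real d * A * C1 * t\<^sup>2" .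
    have nb: "n \<le> \<bar>t\<bar> * B + real d * A * C0 * n\<^sup>2 + real d * A * C1 * t\<^sup>2" using nsum nb0 by linarith
    have half: "real d * A * C0 * n\<^sup>2 \<le> n / 2"
    proof -
      have "real d * A * C0 * n \<le> real d * A * C0 * (1 / (2*real d*A*C0 + 1))"
        using ne A0 C00 by (intro mult_left_mono) auto
      also have "\<dots> \<le> 1/2"
      proof -
        have p: "real d * A * C0 \<ge> 0" using A0 C00 by simp
        thus ?thesis by (simp add: field_simps)
      qed
      finally have "real d * A * C0 * n * n \<le> 1/2 * n" using n0 by (intro mult_right_mono) auto
      thus ?thesis by (simp add: power2_eq_square mult_ac)
    qed
    have t2: "t\<^sup>2 \<le> \<bar>t\<bar>"
    proof -
      have "t\<^sup>2 = \<bar>t\<bar> * \<bar>t\<bar>" by (simp add: power2_eq_square)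
      also have "\<dots> \<le> \<bar>t\<bar> * 1" using t1 by (intro mult_left_mono) auto
      finally show ?thesis by simp
    qed
    have nK: "n \<le> Kd * \<bar>t\<bar>"
    proof -
      have "n \<le> 2 * \<bar>t\<bar> * B + 2 * real d * A * C1 * t\<^sup>2" using nb half by linarith
      also have "2 * real d * A * C1 * t\<^sup>2 \<le> 2 * real d * A * C1 * \<bar>t\<bar>" using t2 A0 C00 by (intro mult_left_mono) auto
      finally show ?thesis unfolding Kd_def by (simp add: algebra_simps)
    qed
    have "n\<^sup>2 \<le> (Kd * \<bar>t\<bar>)\<^sup>2" using nK n0 by (intro power_mono) auto
    hence "n\<^sup>2 \<le> Kd\<^sup>2 * t\<^sup>2" by (simp add: power_mult_distrib)
    hence "A * (C0 * n\<^sup>2 + C1 * t\<^sup>2) \<le> A * (C0 * (Kd\<^sup>2 * t\<^sup>2) + C1 * t\<^sup>2)"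
      using A0 C00 by (intro mult_left_mono add_mono) auto
    also have "\<dots> = K2 * t\<^sup>2" unfolding K2_def by (simp add: algebra_simps)
    finally show ?case using Dk[OF k] unfolding D_def at0 by linarith
  qed
  show ?thesis using deriv_from_quad[OF quad] unfolding v_def .
qed

definition offd :: "nat list \<Rightarrow> nat \<Rightarrow> nat" where
  "offd ds n = sum_list (take n ds)"

lemma catl_nth:
  "map fst xs = ds \<Longrightarrow> n < length xs \<Longrightarrow> k < fst (xs!n) \<Longrightarrow> catl xs (offd ds n + k) = snd (xs!n) k"
proof (induction xs arbitrary: ds n)
  case Nil thus ?case by simp
next
  case (Cons a xs)
  obtain dd u where a: "a = (dd, u)" by (cases a)
  show ?case
  proof (cases n)
    case 0 thus ?thesis using Cons.prems a by (auto simp: offd_def cat2_def)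
  next
    case (Suc n')
    have ds: "ds = dd # map fst xs" using Cons.prems(1) a by auto
    have "offd ds n + k = dd + (offd (map fst xs) n' + k)" unfolding ds Suc offd_def by simp
    moreover have "catl xs (offd (map fst xs) n' + k) = snd (xs!n') k"
      using Cons.IH[of "map fst xs" n'] Cons.prems Suc by auto
    ultimately show ?thesis using a Suc by (simp add: cat2_def)
  qed
qed

lemma offd_lt:
  "map fst xs = ds \<Longrightarrow> n < length xs \<Longrightarrow> k < fst (xs!n) \<Longrightarrow> offd ds n + k < sum_list ds"
proof (induction xs arbitrary: ds n)
  case Nil thus ?case by simp
next
  case (Cons a xs)
  obtain dd u where a: "a = (dd, u)" by (cases a)
  have ds: "ds = dd # map fst xs" using Cons.prems(1) a by auto
  show ?case
  proof (cases n)
    case 0 thus ?thesis using Cons.prems a ds by (auto simp: offd_def)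
  next
    case (Suc n')
    have "offd (map fst xs) n' + k < sum_list (map fst xs)"
      using Cons.IH[of "map fst xs" n'] Cons.prems Suc by auto
    thus ?thesis unfolding ds Suc offd_def by simp
  qed
qed

lemma catl_upd:
  "map fst xs = ds \<Longrightarrow> n < length xs \<Longrightarrow> xs!n = (dd, u) \<Longrightarrow> k0 < dd \<Longrightarrow>
   catl (xs[n := (dd, \<lambda>k. u k + (if k = k0 then t else 0))]) = (\<lambda>p. catl xs p + (if p = offd ds n + k0 then t else 0))"
proof (induction xs arbitrary: ds n)
  case Nil thus ?case by simp
next
  case (Cons a xs)
  obtain d1 u1 where a: "a = (d1, u1)" by (cases a)
  have ds: "ds = d1 # map fst xs" using Cons.prems(1) a by auto
  show ?case
  proof (cases n)
    case 0
    hence "d1 = dd" "u1 = u" using Cons.prems a by auto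
    thus ?thesis using 0 a Cons.prems by (auto simp: offd_def cat2_def fun_eq_iff)
  next
    case (Suc n')
    have IH: "catl (xs[n' := (dd, \<lambda>k. u k + (if k = k0 then t else 0))]) = (\<lambda>p. catl xs p + (if p = offd (map fst xs) n' + k0 then t else 0))"
      using Cons.IH[of "map fst xs" n'] Cons.prems Suc by auto
    have o: "offd ds (Suc n') = d1 + offd (map fst xs) n'" unfolding ds offd_def by simp
    show ?thesis unfolding Suc a list_update_code(3) catl.simps IH o
      by (auto simp: cat2_def fun_eq_iff)
  qed
qed

lemma map_upd_one:
  assumes "distinct L" "n < length L" "L ! n = j" "\<forall>y\<in>set L. y \<noteq> j \<longrightarrow> f' y = f y"
  shows "map f' L = (map f L)[n := f' j]"
  using assms by (intro nth_equalityI) (auto simp: nth_list_update nth_eq_iff_index_eq)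

lemma sum_perturb:
  assumes "finite A"
  shows "(\<Sum>\<gamma>\<in>A. perturb \<mu> \<beta> j l t \<gamma> i' k) = (\<Sum>\<gamma>\<in>A. \<mu> \<gamma> i' k) + (if \<beta> \<in> A \<and> i' = j \<and> k = l then t else 0)"
proof -
  have "(\<Sum>\<gamma>\<in>A. perturb \<mu> \<beta> j l t \<gamma> i' k) = (\<Sum>\<gamma>\<in>A. \<mu> \<gamma> i' k + (if \<gamma> = \<beta> then (if i' = j \<and> k = l then t else 0) else 0))"
    unfolding perturb_def by (intro sum.cong) auto
  also have "\<dots> = (\<Sum>\<gamma>\<in>A. \<mu> \<gamma> i' k) + (if \<beta> \<in> A \<and> i' = j \<and> k = l then t else 0)"
    using assms by (simp add: sum.distrib)
  finally show ?thesis .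
qed

lemma ef_dens_meas:
  assumes "\<forall>k<d. (\<lambda>x. s x k) \<in> borel_measurable M"
  shows "ef_dens M d s \<theta> \<in> borel_measurable M"
  unfolding ef_dens_def using meas_ip[OF assms] by measurable

lemma ef_dens_nonneg: "ef_dens M d s \<theta> x \<ge> 0"
  unfolding ef_dens_def by (intro divide_nonneg_nonneg integral_nonneg_AE) auto

lemma ef_E_distr:
  assumes meas: "\<forall>k<d. (\<lambda>x. s x k) \<in> borel_measurable M" and g: "g \<in> borel_measurable M"
  shows "ef_E M d s \<theta> g = (\<integral>x. g x \<partial>ef_distr M d s \<theta>)"
proof -
  have "(\<integral>x. g x \<partial>density M (\<lambda>x. ennreal (ef_dens M d s \<theta> x))) = (\<integral>x. ef_dens M d s \<theta> x *\<^sub>R g x \<partial>M)"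
    by (rule integral_density[OF g ef_dens_meas[OF meas] AE_I2[OF ef_dens_nonneg]])
  thus ?thesis unfolding ef_E_def ef_distr_def by (simp add: mult.commute)
qed

lemma marg_E:
  fixes V :: "'v::linorder set"
  assumes IF: "inference_family V F \<nu> r \<phi> rb \<phi>b" and \<alpha>: "\<alpha> \<in> F" and i: "i \<in> \<alpha>"
    and Th: "\<Theta> \<in> ef_Theta (fac_meas \<nu> \<alpha>) (fac_dim r rb \<alpha>) (fac_stat r \<phi> rb \<phi>b \<alpha>)"
  obtains \<theta>' where "\<theta>' \<in> ef_Theta (\<nu> i) (r i) (\<phi> i)"
    "\<And>g::_ \<Rightarrow> real. g \<in> borel_measurable (\<nu> i) \<Longrightarrow>
       ef_E (fac_meas \<nu> \<alpha>) (fac_dim r rb \<alpha>) (fac_stat r \<phi> rb \<phi>b \<alpha>) \<Theta> (\<lambda>x. g (x i))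
       = ef_E (\<nu> i) (r i) (\<phi> i) \<theta>' g"
proof -
  let ?M = "fac_meas \<nu> \<alpha>" and ?D = "fac_dim r rb \<alpha>" and ?S = "fac_stat r \<phi> rb \<phi>b \<alpha>"
  obtain \<theta>' where \<theta>': "\<theta>' \<in> ef_Theta (\<nu> i) (r i) (\<phi> i)"
    "distr (ef_distr ?M ?D ?S \<Theta>) (\<nu> i) (\<lambda>x. x i) = ef_distr (\<nu> i) (r i) (\<phi> i) \<theta>'"
    using IF \<alpha> i Th unfolding inference_family_def by blast
  have EFa: "exp_family ?M ?D ?S" using IF \<alpha> unfolding inference_family_def by blast
  have iV: "i \<in> V" using IF \<alpha> i unfolding inference_family_def by blast
  have EFi: "exp_family (\<nu> i) (r i) (\<phi> i)" using IF iV unfolding inference_family_def by blast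
  have proj: "(\<lambda>x. x i) \<in> measurable (ef_distr ?M ?D ?S \<Theta>) (\<nu> i)"
  proof -
    have "(\<lambda>x. x i) \<in> measurable ?M (\<nu> i)" unfolding fac_meas_def using i by (rule measurable_component_singleton)
    thus ?thesis unfolding ef_distr_def by simp
  qed
  show ?thesis
  proof (rule that[OF \<theta>'(1)])
    fix g :: "_ \<Rightarrow> real" assume g: "g \<in> borel_measurable (\<nu> i)"
    have gm: "(\<lambda>x. g (x i)) \<in> borel_measurable ?M"
      using measurable_compose[OF measurable_component_singleton[OF i, of \<nu>] g] unfolding fac_meas_def .
    have "ef_E ?M ?D ?S \<Theta> (\<lambda>x. g (x i)) = (\<integral>x. g (x i) \<partial>ef_distr ?M ?D ?S \<Theta>)"
      by (rule ef_E_distr[OF exp_family_meas[OF EFa] gm])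
    also have "\<dots> = (\<integral>y. g y \<partial>distr (ef_distr ?M ?D ?S \<Theta>) (\<nu> i) (\<lambda>x. x i))"
      by (rule integral_distr[symmetric, OF proj g])
    also have "\<dots> = ef_E (\<nu> i) (r i) (\<phi> i) \<theta>' g"
      unfolding \<theta>'(2) by (rule ef_E_distr[symmetric, OF exp_family_meas[OF EFi] g])
    finally show "ef_E ?M ?D ?S \<Theta> (\<lambda>x. g (x i)) = ef_E (\<nu> i) (r i) (\<phi> i) \<theta>' g" .
  qed
qed

lemma fs_comp:
  fixes \<alpha> :: "'v::linorder set"
  assumes fin: "finite \<alpha>" and n: "n < length (sorted_list_of_set \<alpha>)" "sorted_list_of_set \<alpha> ! n = i" and k: "k < r i"
  shows "fac_stat r \<phi> rb \<phi>b \<alpha> x (offd (rb \<alpha> # map r (sorted_list_of_set \<alpha>)) (Suc n) + k) = \<phi> i (x i) k"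
proof -
  let ?L = "sorted_list_of_set \<alpha>"
  let ?xs = "(rb \<alpha>, \<phi>b \<alpha> x) # map (\<lambda>i. (r i, \<phi> i (x i))) ?L"
  have "catl ?xs (offd (rb \<alpha> # map r ?L) (Suc n) + k) = snd (?xs ! Suc n) k"
    by (rule catl_nth) (use n k in \<open>auto simp: comp_def\<close>)
  thus ?thesis unfolding fac_stat_def using n by simp
qed

lemma fac_dim_sum:
  fixes \<alpha> :: "'v::linorder set"
  assumes fin: "finite \<alpha>"
  shows "sum_list (rb \<alpha> # map r (sorted_list_of_set \<alpha>)) = fac_dim r rb \<alpha>"
  unfolding fac_dim_def using fin by (simp add: sum_list_distinct_conv_sum_set)

lemma pos_lt:
  fixes \<alpha> :: "'v::linorder set"
  assumes fin: "finite \<alpha>" and n: "n < length (sorted_list_of_set \<alpha>)" "sorted_list_of_set \<alpha> ! n = i" and k: "k < r i"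
  shows "offd (rb \<alpha> # map r (sorted_list_of_set \<alpha>)) (Suc n) + k < fac_dim r rb \<alpha>"
proof -
  let ?L = "sorted_list_of_set \<alpha>"
  let ?xs = "(rb \<alpha>, \<lambda>_::nat. 0::real) # map (\<lambda>i. (r i, \<lambda>_::nat. 0::real)) ?L"
  have "offd (rb \<alpha> # map r ?L) (Suc n) + k < sum_list (rb \<alpha> # map r ?L)"
    by (rule offd_lt[of ?xs]) (use n k in \<open>auto simp: comp_def\<close>)
  thus ?thesis using fac_dim_sum[OF fin] by simp
qed

lemma fp_perturb:
  fixes \<alpha> :: "'v::linorder set"
  assumes fin: "finite \<alpha>" and finN: "finite (nbhd F j)"
    and n: "n < length (sorted_list_of_set \<alpha>)" "sorted_list_of_set \<alpha> ! n = j" and l: "l < r j"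
    and \<beta>: "\<beta> \<in> nbhd F j - {\<alpha>}"
  shows "fac_param F r rb thb' thb (perturb \<mu> \<beta> j l t) \<alpha>
       = (\<lambda>p. fac_param F r rb thb' thb \<mu> \<alpha> p + (if p = offd (rb \<alpha> # map r (sorted_list_of_set \<alpha>)) (Suc n) + l then t else 0))"
proof -
  let ?L = "sorted_list_of_set \<alpha>"
  define f where "f \<mu>' j' = (r j', \<lambda>k. thb \<alpha> j' k + (\<Sum>\<beta>'\<in>nbhd F j' - {\<alpha>}. \<mu>' \<beta>' j' k))" for \<mu>' j'
  define u where "u = snd (f \<mu> j)"
  have fj: "f (perturb \<mu> \<beta> j l t) j = (r j, \<lambda>k. u k + (if k = l then t else 0))"
    unfolding f_def u_def using finN \<beta> by (auto simp: sum_perturb fun_eq_iff)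
  have fo: "f (perturb \<mu> \<beta> j l t) j' = f \<mu> j'" if "j' \<noteq> j" for j'
  proof -
    have "perturb \<mu> \<beta> j l t \<beta>' j' = \<mu> \<beta>' j'" for \<beta>' unfolding perturb_def using that by auto
    thus ?thesis unfolding f_def by simp
  qed
  have "map (f (perturb \<mu> \<beta> j l t)) ?L = (map (f \<mu>) ?L)[n := f (perturb \<mu> \<beta> j l t) j]"
    by (rule map_upd_one) (use n fo in auto)
  hence eq: "(rb \<alpha>, thb' \<alpha>) # map (f (perturb \<mu> \<beta> j l t)) ?L
      = ((rb \<alpha>, thb' \<alpha>) # map (f \<mu>) ?L)[Suc n := (r j, \<lambda>k. u k + (if k = l then t else 0))]"
    using fj by simp
  have "catl (((rb \<alpha>, thb' \<alpha>) # map (f \<mu>) ?L)[Suc n := (r j, \<lambda>k. u k + (if k = l then t else 0))])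
     = (\<lambda>p. catl ((rb \<alpha>, thb' \<alpha>) # map (f \<mu>) ?L) p + (if p = offd (rb \<alpha> # map r ?L) (Suc n) + l then t else 0))"
    by (rule catl_upd) (use n l in \<open>auto simp: f_def u_def comp_def\<close>)
  thus ?thesis unfolding fac_param_def f_def[symmetric] eq .
qed

lemma fp_const:
  fixes \<alpha> :: "'v::linorder set"
  assumes fin: "finite \<alpha>" and finF: "finite F"
    and c: "j \<notin> \<alpha> \<or> \<beta> = \<alpha>"
  shows "fac_param F r rb thb' thb (perturb \<mu> \<beta> j l t) \<alpha> = fac_param F r rb thb' thb \<mu> \<alpha>"
proof -
  have fin': "finite (nbhd F j' - {\<alpha>})" for j' using finF unfolding nbhd_def by auto
  show ?thesis unfolding fac_param_def
  proof (intro arg_cong[where f=catl] arg_cong2[where f=Cons] refl map_cong)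
    fix j' assume "j' \<in> set (sorted_list_of_set \<alpha>)"
    hence j': "j' \<in> \<alpha>" using fin by simp
    have "\<not> (\<beta> \<in> nbhd F j' - {\<alpha>} \<and> j' = j \<and> k = l)" for k using c j' by auto
    thus "(r j', \<lambda>k. thb \<alpha> j' k + (\<Sum>\<beta>'\<in>nbhd F j' - {\<alpha>}. perturb \<mu> \<beta> j l t \<beta>' j' k))
       = (r j', \<lambda>k. thb \<alpha> j' k + (\<Sum>\<beta>'\<in>nbhd F j' - {\<alpha>}. \<mu> \<beta>' j' k))"
      by (auto simp: sum_perturb[OF fin'] fun_eq_iff)
  qed
qed

lemma marg_inv:
  fixes V :: "'v::linorder set"
  assumes IF: "inference_family V F \<nu> r \<phi> rb \<phi>b" and \<alpha>: "\<alpha> \<in> F" and i: "i \<in> \<alpha>"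
    and Th: "\<Theta> \<in> ef_Theta (fac_meas \<nu> \<alpha>) (fac_dim r rb \<alpha>) (fac_stat r \<phi> rb \<phi>b \<alpha>)"
  defines "mv \<equiv> (\<lambda>k. if k < r i then ef_E (fac_meas \<nu> \<alpha>) (fac_dim r rb \<alpha>) (fac_stat r \<phi> rb \<phi>b \<alpha>) \<Theta> (\<lambda>x. \<phi> i (x i) k) else 0)"
  shows "the_inv_into (ef_Theta (\<nu> i) (r i) (\<phi> i)) (ef_mean (\<nu> i) (r i) (\<phi> i)) mv \<in> ef_Theta (\<nu> i) (r i) (\<phi> i)
     \<and> ef_mean (\<nu> i) (r i) (\<phi> i) (the_inv_into (ef_Theta (\<nu> i) (r i) (\<phi> i)) (ef_mean (\<nu> i) (r i) (\<phi> i)) mv) = mv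
     \<and> (\<forall>g::_\<Rightarrow>real. g \<in> borel_measurable (\<nu> i) \<longrightarrow>
          ef_E (fac_meas \<nu> \<alpha>) (fac_dim r rb \<alpha>) (fac_stat r \<phi> rb \<phi>b \<alpha>) \<Theta> (\<lambda>x. g (x i))
          = ef_E (\<nu> i) (r i) (\<phi> i) (the_inv_into (ef_Theta (\<nu> i) (r i) (\<phi> i)) (ef_mean (\<nu> i) (r i) (\<phi> i)) mv) g)"
proof -
  obtain \<theta>' where \<theta>': "\<theta>' \<in> ef_Theta (\<nu> i) (r i) (\<phi> i)"
    "\<And>g::_\<Rightarrow>real. g \<in> borel_measurable (\<nu> i) \<Longrightarrow>
       ef_E (fac_meas \<nu> \<alpha>) (fac_dim r rb \<alpha>) (fac_stat r \<phi> rb \<phi>b \<alpha>) \<Theta> (\<lambda>x. g (x i))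
       = ef_E (\<nu> i) (r i) (\<phi> i) \<theta>' g"
    using marg_E[OF IF \<alpha> i Th] by blast
  have iV: "i \<in> V" using IF \<alpha> i unfolding inference_family_def by blast
  have EFi: "exp_family (\<nu> i) (r i) (\<phi> i)" and inj: "inj_on (ef_mean (\<nu> i) (r i) (\<phi> i)) (ef_Theta (\<nu> i) (r i) (\<phi> i))"
    using IF iV unfolding inference_family_def by blast+
  have "ef_mean (\<nu> i) (r i) (\<phi> i) \<theta>' = mv"
  proof
    fix k show "ef_mean (\<nu> i) (r i) (\<phi> i) \<theta>' k = mv k"
    proof (cases "k < r i")
      case True
      have "(\<lambda>y. \<phi> i y k) \<in> borel_measurable (\<nu> i)" using exp_family_meas[OF EFi] True by blast
      from \<theta>'(2)[OF this] show ?thesis using True unfolding ef_mean_def mv_def by simp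
    qed (simp add: ef_mean_def mv_def)
  qed
  hence e: "the_inv_into (ef_Theta (\<nu> i) (r i) (\<phi> i)) (ef_mean (\<nu> i) (r i) (\<phi> i)) mv = \<theta>'"
    by (intro the_inv_into_f_eq[OF inj] \<theta>'(1))
  show ?thesis unfolding e using \<theta>' \<open>ef_mean (\<nu> i) (r i) (\<phi> i) \<theta>' = mv\<close> by auto
qed

lemma perturb0: "perturb \<mu> \<beta> j l 0 = \<mu>"
  unfolding perturb_def by (auto simp: fun_eq_iff)

lemma sum_ev: "q < D \<Longrightarrow> (\<Sum>p<D. ev q t p * c p) = t * c q"
proof -
  assume q: "q < D"
  have "(\<Sum>p<D. ev q t p * c p) = (\<Sum>p<D. if p = q then t * c p else 0)"
    unfolding ev_def by (intro sum.cong) auto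
  thus ?thesis using q by simp
qed

lemma addv_ev: "addv \<Theta> (ev q t) = (\<lambda>p. \<Theta> p + (if p = q then t else 0))"
  unfolding addv_def ev_def by auto

theorem theorem10:
  fixes V :: "'v::linorder set" and F :: "'v set set"
    and \<nu> :: "'v \<Rightarrow> 'x measure" and r :: "'v \<Rightarrow> nat" and \<phi> :: "'v \<Rightarrow> 'x \<Rightarrow> nat \<Rightarrow> real"
    and rb :: "'v set \<Rightarrow> nat" and \<phi>b :: "'v set \<Rightarrow> ('v \<Rightarrow> 'x) \<Rightarrow> nat \<Rightarrow> real"
    and thb' :: "'v set \<Rightarrow> nat \<Rightarrow> real" and thb :: "'v set \<Rightarrow> 'v \<Rightarrow> nat \<Rightarrow> real"
    and \<mu>s :: "'v set \<Rightarrow> 'v \<Rightarrow> nat \<Rightarrow> real"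
  assumes IF: "inference_family V F \<nu> r \<phi> rb \<phi>b"
    and model: "\<forall>\<alpha>\<in>F. thb' \<alpha> \<in> vecs (rb \<alpha>) \<and> (\<forall>i\<in>\<alpha>. thb \<alpha> i \<in> vecs (r i))"
    and msgs: "\<forall>\<alpha>\<in>F. \<forall>i\<in>\<alpha>. \<mu>s \<alpha> i \<in> vecs (r i)"
    and beliefs: "\<forall>\<alpha>\<in>F. fac_param F r rb thb' thb \<mu>s \<alpha>
                      \<in> ef_Theta (fac_meas \<nu> \<alpha>) (fac_dim r rb \<alpha>) (fac_stat r \<phi> rb \<phi>b \<alpha>)"
    and fixpt: "\<forall>\<alpha>\<in>F. \<forall>i\<in>\<alpha>. lbp_T F \<nu> r \<phi> rb \<phi>b thb' thb \<mu>s \<alpha> i = \<mu>s \<alpha> i"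
  shows "\<forall>\<alpha>\<in>F. \<forall>i\<in>\<alpha>. \<forall>\<beta>\<in>F. \<forall>j\<in>\<beta>. \<forall>k<r i. \<forall>l<r j.
    ((\<lambda>t. lbp_T F \<nu> r \<phi> rb \<phi>b thb' thb (perturb \<mu>s \<beta> j l t) \<alpha> i k)
       has_real_derivative
       (if j \<in> \<alpha> \<and> j \<noteq> i \<and> \<beta> \<noteq> \<alpha> then
          mat_mult (r i)
            (mat_inv (r i) (ef_cov (\<nu> i) (r i) (\<phi> i) (\<lambda>k'. \<Sum>\<gamma>\<in>nbhd F i. \<mu>s \<gamma> i k') (\<phi> i) (\<phi> i)))
            (ef_cov (fac_meas \<nu> \<alpha>) (fac_dim r rb \<alpha>) (fac_stat r \<phi> rb \<phi>b \<alpha>)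
                    (fac_param F r rb thb' thb \<mu>s \<alpha>) (\<lambda>x. \<phi> i (x i)) (\<lambda>x. \<phi> j (x j))) k l
        else 0)) (at 0)"
proof (intro ballI allI impI)
  fix \<alpha> i \<beta> j k l
  assume \<alpha>: "\<alpha> \<in> F" and i: "i \<in> \<alpha>" and \<beta>: "\<beta> \<in> F" and j: "j \<in> \<beta>" and k: "k < r i" and l: "l < r j"
  let ?N = "\<nu> i" and ?d = "r i" and ?s = "\<phi> i"
  let ?M = "fac_meas \<nu> \<alpha>" and ?D = "fac_dim r rb \<alpha>" and ?S = "fac_stat r \<phi> rb \<phi>b \<alpha>"
  let ?L = "sorted_list_of_set \<alpha>" and ?ds = "rb \<alpha> # map r (sorted_list_of_set \<alpha>)"
  let ?TI = "the_inv_into (ef_Theta ?N ?d ?s) (ef_mean ?N ?d ?s)"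
  have finV: "finite V" and finF: "finite F" and sub: "\<alpha> \<subseteq> V"
    using IF \<alpha> unfolding inference_family_def by blast+
  have fin\<alpha>: "finite \<alpha>" using finV sub finite_subset by blast
  have iV: "i \<in> V" using sub i by blast
  have EFi: "exp_family ?N ?d ?s" and inj: "inj_on (ef_mean ?N ?d ?s) (ef_Theta ?N ?d ?s)"
    using IF iV unfolding inference_family_def by blast+
  have EFa: "exp_family ?M ?D ?S" using IF \<alpha> unfolding inference_family_def by blast
  have d: "?d > 0" using k by simp
  have finN: "finite (nbhd F x)" for x using finF unfolding nbhd_def by simp
  define mv where "mv \<mu>' = (\<lambda>k'. if k' < ?d then ef_E ?M ?D ?S (fac_param F r rb thb' thb \<mu>' \<alpha>) (\<lambda>x. \<phi> i (x i) k') else 0)" for \<mu>'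
  have lbpT: "lbp_T F \<nu> r \<phi> rb \<phi>b thb' thb \<mu>' \<alpha> i = (\<lambda>k'. ?TI (mv \<mu>') k' - (\<Sum>\<gamma>\<in>nbhd F i - {\<alpha>}. \<mu>' \<gamma> i k'))" for \<mu>'
    unfolding lbp_T_def mv_def Let_def ..
  define \<Theta>0 where "\<Theta>0 = fac_param F r rb thb' thb \<mu>s \<alpha>"
  have Th0: "\<Theta>0 \<in> ef_Theta ?M ?D ?S" using beliefs \<alpha> unfolding \<Theta>0_def by blast
  define \<theta>0 where "\<theta>0 = ?TI (mv \<mu>s)"
  have G0: "\<theta>0 \<in> ef_Theta ?N ?d ?s \<and> ef_mean ?N ?d ?s \<theta>0 = mv \<mu>s \<and>
      (\<forall>g::_\<Rightarrow>real. g \<in> borel_measurable ?N \<longrightarrow> ef_E ?M ?D ?S \<Theta>0 (\<lambda>x. g (x i)) = ef_E ?N ?d ?s \<theta>0 g)"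
    using marg_inv[OF IF \<alpha> i Th0] unfolding \<theta>0_def mv_def \<Theta>0_def by simp
  have th0: "\<theta>0 \<in> ef_Theta ?N ?d ?s" using G0 by blast
  have th0eq: "(\<lambda>k'. \<Sum>\<gamma>\<in>nbhd F i. \<mu>s \<gamma> i k') = \<theta>0"
  proof
    fix k'
    have "lbp_T F \<nu> r \<phi> rb \<phi>b thb' thb \<mu>s \<alpha> i k' = \<mu>s \<alpha> i k'" using fixpt \<alpha> i by simp
    hence a: "\<theta>0 k' - (\<Sum>\<gamma>\<in>nbhd F i - {\<alpha>}. \<mu>s \<gamma> i k') = \<mu>s \<alpha> i k'" unfolding lbpT \<theta>0_def by simp
    have "\<alpha> \<in> nbhd F i" using \<alpha> i unfolding nbhd_def by simp
    hence "(\<Sum>\<gamma>\<in>nbhd F i. \<mu>s \<gamma> i k') = \<mu>s \<alpha> i k' + (\<Sum>\<gamma>\<in>nbhd F i - {\<alpha>}. \<mu>s \<gamma> i k')"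
      using finN by (simp add: sum.remove)
    thus "(\<Sum>\<gamma>\<in>nbhd F i. \<mu>s \<gamma> i k') = \<theta>0 k'" using a by simp
  qed
  define H where "H = ef_cov ?N ?d ?s \<theta>0 ?s ?s"
  define Hinv where "Hinv = mat_inv ?d H"
  have HI: "mat_is_inv ?d H Hinv" unfolding Hinv_def H_def
    by (rule mat_inv_is_inv) (use EFi th0 in \<open>auto simp: exp_family_def\<close>)
  show "((\<lambda>t. lbp_T F \<nu> r \<phi> rb \<phi>b thb' thb (perturb \<mu>s \<beta> j l t) \<alpha> i k)
       has_real_derivative
       (if j \<in> \<alpha> \<and> j \<noteq> i \<and> \<beta> \<noteq> \<alpha> then
          mat_mult (r i)
            (mat_inv (r i) (ef_cov (\<nu> i) (r i) (\<phi> i) (\<lambda>k'. \<Sum>\<gamma>\<in>nbhd F i. \<mu>s \<gamma> i k') (\<phi> i) (\<phi> i)))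
            (ef_cov (fac_meas \<nu> \<alpha>) (fac_dim r rb \<alpha>) (fac_stat r \<phi> rb \<phi>b \<alpha>)
                    (fac_param F r rb thb' thb \<mu>s \<alpha>) (\<lambda>x. \<phi> i (x i)) (\<lambda>x. \<phi> j (x j))) k l
        else 0)) (at 0)"
  proof (cases "j \<in> \<alpha> \<and> \<beta> \<noteq> \<alpha>")
    case False
    hence c: "j \<notin> \<alpha> \<or> \<beta> = \<alpha>" by blast
    have fpc: "fac_param F r rb thb' thb (perturb \<mu>s \<beta> j l t) \<alpha> = \<Theta>0" for t
      unfolding \<Theta>0_def by (rule fp_const[OF fin\<alpha> finF c])
    have nc: "\<not> (\<beta> \<in> nbhd F i - {\<alpha>} \<and> i = j \<and> k = l)" using c i by auto
    have "(\<lambda>t. lbp_T F \<nu> r \<phi> rb \<phi>b thb' thb (perturb \<mu>s \<beta> j l t) \<alpha> i k)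
        = (\<lambda>t. ?TI (mv \<mu>s) k - (\<Sum>\<gamma>\<in>nbhd F i - {\<alpha>}. \<mu>s \<gamma> i k))"
    proof -
      have ifz: "(if \<beta> \<in> nbhd F i - {\<alpha>} \<and> i = j \<and> k = l then t else 0) = 0" for t::real using nc by auto
      show ?thesis unfolding lbpT mv_def fpc \<Theta>0_def[symmetric] sum_perturb[OF finite_Diff[OF finN]] ifz by simp
    qed
    thus ?thesis using False by auto
  next
    case True
    hence j\<alpha>: "j \<in> \<alpha>" and \<beta>\<alpha>: "\<beta> \<noteq> \<alpha>" by auto
    have \<beta>N: "\<beta> \<in> nbhd F j - {\<alpha>}" using \<beta> j \<beta>\<alpha> unfolding nbhd_def by simp
    obtain n where n: "n < length ?L" "?L ! n = j" using j\<alpha> fin\<alpha> by (metis in_set_conv_nth set_sorted_list_of_set)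
    obtain ni where ni: "ni < length ?L" "?L ! ni = i" using i fin\<alpha> by (metis in_set_conv_nth set_sorted_list_of_set)
    define q where "q = offd ?ds (Suc n) + l"
    have qD: "q < ?D" unfolding q_def by (rule pos_lt[where r=r and rb=rb, OF fin\<alpha> n l])
    define pk where "pk k' = offd ?ds (Suc ni) + k'" for k'
    have Spk: "(\<lambda>x. ?S x (pk k')) = (\<lambda>x. \<phi> i (x i) k')" if "k' < ?d" for k'
      unfolding pk_def using fs_comp[where r=r and rb=rb and \<phi>=\<phi> and \<phi>b=\<phi>b, OF fin\<alpha> ni that] by simp
    have Sq: "(\<lambda>x. ?S x q) = (\<lambda>x. \<phi> j (x j) l)"
      unfolding q_def using fs_comp[where r=r and rb=rb and \<phi>=\<phi> and \<phi>b=\<phi>b, OF fin\<alpha> n l] by simp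
    have pkD: "pk k' < ?D" if "k' < ?d" for k' unfolding pk_def by (rule pos_lt[where r=r and rb=rb, OF fin\<alpha> ni that])
    have fpp: "fac_param F r rb thb' thb (perturb \<mu>s \<beta> j l t) \<alpha> = addv \<Theta>0 (ev q t)" for t
      unfolding addv_ev \<Theta>0_def q_def by (rule fp_perturb[where r=r and rb=rb and thb=thb and thb'=thb', OF fin\<alpha> finN[of j] n l \<beta>N])
    define mt where "mt t = mv (perturb \<mu>s \<beta> j l t)" for t
    define \<theta>t where "\<theta>t t = ?TI (mt t)" for t
    have cond: "(\<beta> \<in> nbhd F i - {\<alpha>} \<and> i = j \<and> k = l) = (i = j \<and> k = l)" using \<beta>N by auto
    have fun_eq: "(\<lambda>t. lbp_T F \<nu> r \<phi> rb \<phi>b thb' thb (perturb \<mu>s \<beta> j l t) \<alpha> i k)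
        = (\<lambda>t. \<theta>t t k - ((\<Sum>\<gamma>\<in>nbhd F i - {\<alpha>}. \<mu>s \<gamma> i k) + (if i = j \<and> k = l then t else 0)))"
      unfolding lbpT \<theta>t_def mt_def sum_perturb[OF finite_Diff[OF finN]] cond ..
    have mt_eq: "mt t = (\<lambda>k'. if k' < ?d then ef_E ?M ?D ?S (addv \<Theta>0 (ev q t)) (\<lambda>x. \<phi> i (x i) k') else 0)" for t
      unfolding mt_def mv_def fpp ..
    have mt0: "mt 0 = mv \<mu>s" unfolding mt_def perturb0 ..
    have at0: "\<theta>t 0 = \<theta>0" unfolding \<theta>t_def mt0 \<theta>0_def ..
    obtain e where e: "e > 0" "\<forall>h\<in>vecs ?D. n1 ?D h < e \<longrightarrow> addv \<Theta>0 h \<in> ef_Theta ?M ?D ?S"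
      using open_ball_vecs[OF exp_family_open[OF EFa] Th0] by blast
    have evT: "eventually (\<lambda>t. addv \<Theta>0 (ev q t) \<in> ef_Theta ?M ?D ?S) (at (0::real))"
    proof -
      have "eventually (\<lambda>t::real. \<bar>t\<bar> < e) (at 0)"
        unfolding eventually_at using e(1) by (intro exI[of _ e]) (auto simp: dist_real_def)
      thus ?thesis
      proof (rule eventually_mono)
        fix t :: real assume "\<bar>t\<bar> < e"
        thus "addv \<Theta>0 (ev q t) \<in> ef_Theta ?M ?D ?S" using e(2) ev_vecs[OF qD] n1_ev[OF qD] by auto
      qed
    qed
    have ev: "eventually (\<lambda>t. \<theta>t t \<in> ef_Theta ?N ?d ?s \<and> ef_mean ?N ?d ?s (\<theta>t t) = mt t) (at 0)"
      using evT
    proof (rule eventually_mono)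
      fix t assume a: "addv \<Theta>0 (ev q t) \<in> ef_Theta ?M ?D ?S"
      show "\<theta>t t \<in> ef_Theta ?N ?d ?s \<and> ef_mean ?N ?d ?s (\<theta>t t) = mt t"
        using marg_inv[OF IF \<alpha> i a] unfolding \<theta>t_def mt_eq by simp
    qed
    have m0: "ef_mean ?N ?d ?s \<theta>0 = mt 0" using G0 mt0 by simp
    have Dpos: "?D > 0" using qD by simp
    define c where "c k' = ef_cov ?M ?D ?S \<Theta>0 ?S ?S (pk k') q" for k'
    obtain \<eta> C where \<eta>: "\<eta> > 0" and C: "\<forall>h\<in>vecs ?D. n1 ?D h < \<eta> \<longrightarrow> addv \<Theta>0 h \<in> ef_Theta ?M ?D ?S \<and> (\<forall>p<?D.
       \<bar>ef_E ?M ?D ?S (addv \<Theta>0 h) (\<lambda>x. ?S x p) - ef_E ?M ?D ?S \<Theta>0 (\<lambda>x. ?S x p)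
         - (\<Sum>p'<?D. h p' * ef_cov ?M ?D ?S \<Theta>0 ?S ?S p p')\<bar> \<le> C * (n1 ?D h)\<^sup>2)"
      using mean_est[OF EFa Dpos Th0] by blast
    have mest: "eventually (\<lambda>t. \<forall>k'<?d. \<bar>mt t k' - mt 0 k' - t * c k'\<bar> \<le> C * t\<^sup>2) (at 0)"
    proof -
      have "eventually (\<lambda>t::real. \<bar>t\<bar> < \<eta>) (at 0)"
        unfolding eventually_at using \<eta> by (intro exI[of _ \<eta>]) (auto simp: dist_real_def)
      thus ?thesis
      proof (rule eventually_mono)
        fix t :: real assume t: "\<bar>t\<bar> < \<eta>"
        show "\<forall>k'<?d. \<bar>mt t k' - mt 0 k' - t * c k'\<bar> \<le> C * t\<^sup>2"
        proof (intro allI impI)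
          fix k' assume k': "k' < ?d"
          have "\<bar>ef_E ?M ?D ?S (addv \<Theta>0 (ev q t)) (\<lambda>x. ?S x (pk k')) - ef_E ?M ?D ?S \<Theta>0 (\<lambda>x. ?S x (pk k'))
             - (\<Sum>p'<?D. ev q t p' * ef_cov ?M ?D ?S \<Theta>0 ?S ?S (pk k') p')\<bar> \<le> C * (n1 ?D (ev q t))\<^sup>2"
          proof -
            have nt: "n1 ?D (ev q t) < \<eta>" using t n1_ev[OF qD] by simp
            show ?thesis using bspec[OF C ev_vecs[OF qD], THEN mp, OF nt, THEN conjunct2, rule_format, OF pkD[OF k']] .
          qed
          moreover have "ef_E ?M ?D ?S \<Theta>0 (\<lambda>x. ?S x (pk k')) = mt 0 k'"
            unfolding mt0 mv_def \<Theta>0_def[symmetric] Spk[OF k'] using k' by simp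
          moreover have "ef_E ?M ?D ?S (addv \<Theta>0 (ev q t)) (\<lambda>x. ?S x (pk k')) = mt t k'"
            unfolding mt_eq Spk[OF k'] using k' by simp
          ultimately show "\<bar>mt t k' - mt 0 k' - t * c k'\<bar> \<le> C * t\<^sup>2"
            unfolding c_def sum_ev[OF qD] n1_ev[OF qD] by simp
        qed
      qed
    qed
    have deriv: "((\<lambda>t. \<theta>t t k) has_real_derivative (\<Sum>m<?d. Hinv k m * c m)) (at 0)"
      by (rule inv_deriv[OF EFi d inj th0 ev at0 m0 mest HI[unfolded H_def] k])
    have cm: "c m = ef_cov ?M ?D ?S \<Theta>0 (\<lambda>x. \<phi> i (x i)) (\<lambda>x. \<phi> j (x j)) m l" if "m < ?d" for m
    proof -
      have a: "(\<lambda>x. ?S x (pk m) * ?S x q) = (\<lambda>x. \<phi> i (x i) m * \<phi> j (x j) l)"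
        using fun_cong[OF Spk[OF that]] fun_cong[OF Sq] by auto
      show ?thesis unfolding c_def ef_cov_def a Spk[OF that] Sq ..
    qed
    show ?thesis
    proof (cases "j = i")
      case False
      have "((\<lambda>t. \<theta>t t k - ((\<Sum>\<gamma>\<in>nbhd F i - {\<alpha>}. \<mu>s \<gamma> i k) + (if i = j \<and> k = l then t else 0)))
          has_real_derivative (\<Sum>m<?d. Hinv k m * c m) - 0) (at 0)"
        using False by (intro DERIV_diff deriv) simp
      moreover have "(\<Sum>m<?d. Hinv k m * c m) = mat_mult ?d Hinv (ef_cov ?M ?D ?S \<Theta>0 (\<lambda>x. \<phi> i (x i)) (\<lambda>x. \<phi> j (x j))) k l"
        unfolding mat_mult_def by (intro sum.cong) (auto simp: cm)
      ultimately show ?thesis unfolding fun_eq using True False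
        by (simp add: th0eq Hinv_def H_def \<Theta>0_def)
    next
      case ji: True
      have cH: "c m = H m l" if "m < ?d" for m
      proof -
        have mm: "(\<lambda>y. \<phi> i y m) \<in> borel_measurable ?N" "(\<lambda>y. \<phi> i y l) \<in> borel_measurable ?N"
          using exp_family_meas[OF EFi] that l ji by auto
        have mm2: "(\<lambda>y. \<phi> i y m * \<phi> i y l) \<in> borel_measurable ?N" using mm by measurable
        have E1: "ef_E ?M ?D ?S \<Theta>0 (\<lambda>x. \<phi> i (x i) m * \<phi> i (x i) l) = ef_E ?N ?d ?s \<theta>0 (\<lambda>y. \<phi> i y m * \<phi> i y l)"
          using G0 mm2 by blast
        have E2: "ef_E ?M ?D ?S \<Theta>0 (\<lambda>x. \<phi> i (x i) m) = ef_E ?N ?d ?s \<theta>0 (\<lambda>y. \<phi> i y m)"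
          using G0 mm(1) by blast
        have E3: "ef_E ?M ?D ?S \<Theta>0 (\<lambda>x. \<phi> i (x i) l) = ef_E ?N ?d ?s \<theta>0 (\<lambda>y. \<phi> i y l)"
          using G0 mm(2) by blast
        show ?thesis unfolding cm[OF that] H_def ef_cov_def using ji E1 E2 E3 by simp
      qed
      have "(\<Sum>m<?d. Hinv k m * c m) = mat_mult ?d Hinv H k l"
        unfolding mat_mult_def by (intro sum.cong) (auto simp: cH)
      also have "\<dots> = (if k = l then 1 else 0)" using HI k l ji unfolding mat_is_inv_def by auto
      finally have sc: "(\<Sum>m<?d. Hinv k m * c m) = (if k = l then 1 else 0)" .
      have "((\<lambda>t. \<theta>t t k - ((\<Sum>\<gamma>\<in>nbhd F i - {\<alpha>}. \<mu>s \<gamma> i k) + (if i = j \<and> k = l then t else 0)))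
          has_real_derivative (\<Sum>m<?d. Hinv k m * c m) - (0 + (if k = l then 1 else 0))) (at 0)"
      proof (intro DERIV_diff deriv DERIV_add DERIV_const)
        show "((\<lambda>t. if i = j \<and> k = l then t else 0) has_real_derivative (if k = l then 1 else 0)) (at 0)"
          using ji by (cases "k = l") (auto intro: DERIV_ident)
      qed
      thus ?thesis unfolding fun_eq sc using ji by simp
    qed
  qed
qed

end
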